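(* Let $f:(\mathbb{C}^3,0)\to(\mathbb{C}^3,0)$ be a degenerate spike $$f(x,y,z)=(x+z^c(\lambda x+P),\; y+z^c(\mu y+Q),\; z+z^{c+1}R),$$ with $c\in\mathbb{N}^*$, $\lambda\in\mathbb{C}^*$, $\mu\in\lambda\mathbb{R}_{<0}$, $P,Q\in\mathfrak{m}^2$, $R\in\mathfrak{m}$. Let $\pi:X\to(\mathbb{C}^3,0)$ be the blow-up of the origin and $\tilde f$ the lift of $f$ to $X$. Then: - at the point of the exceptional divisor corresponding to $[0:0:1]$, $\tilde f$ is a degenerate spike; - at the points corresponding to $[1:0:0]$ and $[0:1:0]$, $\tilde f$ is a simple corner.
   Context: $\mathfrak{m}$ denotes the maximal ideal at $0$. A degenerate spike is a germ of the displayed form in some local coordinates. A simple corner is a germ of the form $$(x+x^ay^bz^c\,x(\lambda+P),\; y+x^ay^bz^c\,y(\mu+Q),\; z+x^ay^bz^c\,R)$$ in some local coordinates, with $a,b\in\mathbb{N}^*$, $c\in\mathbb{N}$, $\lambda\in\mathbb{C}^*$, $\mu\in\mathbb{C}\setminus\lambda\mathbb{Q}_{>0}$, $P,Q,R\in\mathfrak{m}$, and $z\mid R$ if $c>0$. *)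

theory Defs
  imports "HOL-Analysis.Analysis"
begin

type_synonym c3 = "complex \<times> complex \<times> complex"

definition smul3 :: "complex \<Rightarrow> c3 \<Rightarrow> c3" where
  "smul3 c v = (c * fst v, c * fst (snd v), c * snd (snd v))"

definition hol_at :: "(c3 \<Rightarrow> complex) \<Rightarrow> c3 \<Rightarrow> bool" where
  "hol_at g p \<longleftrightarrow> (\<exists>S. open S \<and> p \<in> S \<and>
      (\<forall>q\<in>S. \<exists>L. (g has_derivative L) (at q) \<and> (\<forall>c v. L (smul3 c v) = c * L v)))"

definition hol3_at :: "(c3 \<Rightarrow> c3) \<Rightarrow> c3 \<Rightarrow> bool" where
  "hol3_at F p \<longleftrightarrow> hol_at (\<lambda>v. fst (F v)) p \<and> hol_at (\<lambda>v. fst (snd (F v))) p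
                    \<and> hol_at (\<lambda>v. snd (snd (F v))) p"

definition in_m :: "(c3 \<Rightarrow> complex) \<Rightarrow> bool" where
  "in_m g \<longleftrightarrow> hol_at g 0 \<and> g 0 = 0"

definition in_m2 :: "(c3 \<Rightarrow> complex) \<Rightarrow> bool" where
  "in_m2 g \<longleftrightarrow> (\<exists>(n::nat) a b. (\<forall>i<n. in_m (a i) \<and> in_m (b i)) \<and>
       (\<forall>\<^sub>F v in nhds 0. g v = (\<Sum>i<n. a i v * b i v)))"

definition loc_coords :: "(c3 \<Rightarrow> c3) \<Rightarrow> c3 \<Rightarrow> bool" where
  "loc_coords \<phi> p \<longleftrightarrow> hol3_at \<phi> 0 \<and> \<phi> 0 = p \<and>
     (\<exists>\<psi>. hol3_at \<psi> p \<and> \<psi> p = 0 \<and> (\<forall>\<^sub>F v in nhds 0. \<psi> (\<phi> v) = v)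
          \<and> (\<forall>\<^sub>F w in nhds p. \<phi> (\<psi> w) = w))"

definition germ_in_coords :: "(c3 \<Rightarrow> c3) \<Rightarrow> c3 \<Rightarrow> (c3 \<Rightarrow> c3) \<Rightarrow> bool" where
  "germ_in_coords f p F \<longleftrightarrow> (\<exists>\<phi>. loc_coords \<phi> p \<and> (\<forall>\<^sub>F v in nhds 0. f (\<phi> v) = \<phi> (F v)))"

definition spike_form :: "nat \<Rightarrow> complex \<Rightarrow> complex \<Rightarrow> (c3 \<Rightarrow> complex) \<Rightarrow> (c3 \<Rightarrow> complex)
     \<Rightarrow> (c3 \<Rightarrow> complex) \<Rightarrow> c3 \<Rightarrow> c3" where
  "spike_form c lam mu P Q R = (\<lambda>(x,y,z).
     (x + z^c * (lam * x + P (x,y,z)), y + z^c * (mu * y + Q (x,y,z)), z + z^(c+1) * R (x,y,z)))"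

definition spike_params :: "nat \<Rightarrow> complex \<Rightarrow> complex \<Rightarrow> (c3 \<Rightarrow> complex) \<Rightarrow> (c3 \<Rightarrow> complex)
     \<Rightarrow> (c3 \<Rightarrow> complex) \<Rightarrow> bool" where
  "spike_params c lam mu P Q R \<longleftrightarrow> c \<ge> 1 \<and> lam \<noteq> 0 \<and>
     (\<exists>t::real. t < 0 \<and> mu = complex_of_real t * lam) \<and> in_m2 P \<and> in_m2 Q \<and> in_m R"

definition degenerate_spike :: "(c3 \<Rightarrow> c3) \<Rightarrow> c3 \<Rightarrow> bool" where
  "degenerate_spike f p \<longleftrightarrow> (\<exists>c lam mu P Q R. spike_params c lam mu P Q R \<and>
       germ_in_coords f p (spike_form c lam mu P Q R))"

definition corner_form :: "nat \<Rightarrow> nat \<Rightarrow> nat \<Rightarrow> complex \<Rightarrow> complex \<Rightarrow> (c3 \<Rightarrow> complex)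
     \<Rightarrow> (c3 \<Rightarrow> complex) \<Rightarrow> (c3 \<Rightarrow> complex) \<Rightarrow> c3 \<Rightarrow> c3" where
  "corner_form a b c lam mu P Q R = (\<lambda>(x,y,z). let m = x^a * y^b * z^c in
     (x + m * (x * (lam + P (x,y,z))), y + m * (y * (mu + Q (x,y,z))), z + m * R (x,y,z)))"

definition simple_corner :: "(c3 \<Rightarrow> c3) \<Rightarrow> c3 \<Rightarrow> bool" where
  "simple_corner f p \<longleftrightarrow> (\<exists>a b c lam mu P Q R. a \<ge> 1 \<and> b \<ge> 1 \<and> lam \<noteq> 0 \<and>
       \<not> (\<exists>q::rat. q > 0 \<and> mu = of_rat q * lam) \<and> in_m P \<and> in_m Q \<and> in_m R \<and>
       (c > 0 \<longrightarrow> (\<exists>S. hol_at S 0 \<and> (\<forall>\<^sub>F v in nhds 0. R v = snd (snd v) * S v))) \<and>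
       germ_in_coords f p (corner_form a b c lam mu P Q R))"

text \<open>Standard affine charts of the blow-up of the origin of C^3, centred at the points
  [1:0:0], [0:1:0], [0:0:1] of the exceptional divisor: pi restricted to the chart.\<close>
definition chart1 :: "c3 \<Rightarrow> c3" where "chart1 = (\<lambda>(s,t,r). (s, s*t, s*r))"
definition chart2 :: "c3 \<Rightarrow> c3" where "chart2 = (\<lambda>(s,t,r). ((t * s), t, (t * r)))"
definition chart3 :: "c3 \<Rightarrow> c3" where "chart3 = (\<lambda>(s,t,r). ((s * r), (t * r), r))"

text \<open>G is (the germ at the chart origin of) the lift of f, written in the chart sigma:
  a holomorphic germ with pi o G = f o pi.\<close>
definition is_lift :: "(c3 \<Rightarrow> c3) \<Rightarrow> (c3 \<Rightarrow> c3) \<Rightarrow> (c3 \<Rightarrow> c3) \<Rightarrow> bool" where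
  "is_lift \<sigma> f G \<longleftrightarrow> hol3_at G 0 \<and> (\<forall>\<^sub>F v in nhds 0. \<sigma> (G v) = f (\<sigma> v))"

end

theory Submission
  imports Defs "HOL-Complex_Analysis.Complex_Analysis"
begin


definition holo :: "c3 set \<Rightarrow> (c3 \<Rightarrow> complex) \<Rightarrow> bool" where
  "holo S g \<longleftrightarrow> open S \<and> (\<forall>q\<in>S. \<exists>L. (g has_derivative L) (at q) \<and> (\<forall>c v. L (smul3 c v) = c * L v))"

lemma hol_at_holo: "hol_at g p \<longleftrightarrow> (\<exists>S. p \<in> S \<and> holo S g)"
  unfolding hol_at_def holo_def by blast

lemma holo_open: "holo S g \<Longrightarrow> open S" by (simp add: holo_def)

lemma holo_const: "open S \<Longrightarrow> holo S (\<lambda>v. k)"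
  unfolding holo_def by (auto intro!: exI[of _ "\<lambda>v. 0"])

lemma holo_x: "open S \<Longrightarrow> holo S (\<lambda>v. fst v)"
  unfolding holo_def
  by (auto intro!: exI[of _ "\<lambda>v. fst v"] has_derivative_fst has_derivative_ident simp: smul3_def)

lemma holo_y: "open S \<Longrightarrow> holo S (\<lambda>v. fst (snd v))"
  unfolding holo_def
  by (auto intro!: exI[of _ "\<lambda>v. fst (snd v)"] has_derivative_fst has_derivative_snd has_derivative_ident simp: smul3_def)

lemma holo_z: "open S \<Longrightarrow> holo S (\<lambda>v. snd (snd v))"
  unfolding holo_def
  by (auto intro!: exI[of _ "\<lambda>v. snd (snd v)"] has_derivative_snd has_derivative_ident simp: smul3_def)

lemma holo_add: "holo S f \<Longrightarrow> holo S g \<Longrightarrow> holo S (\<lambda>v. f v + g v)"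
  unfolding holo_def
proof safe
  fix q assume "open S" "q \<in> S"
    "\<forall>q\<in>S. \<exists>L. (f has_derivative L) (at q) \<and> (\<forall>c v. L (smul3 c v) = c * L v)"
    "\<forall>q\<in>S. \<exists>L. (g has_derivative L) (at q) \<and> (\<forall>c v. L (smul3 c v) = c * L v)"
  then obtain L1 L2 where "(f has_derivative L1) (at q)" "\<forall>c v. L1 (smul3 c v) = c * L1 v"
    "(g has_derivative L2) (at q)" "\<forall>c v. L2 (smul3 c v) = c * L2 v" by blast
  then show "\<exists>L. ((\<lambda>v. f v + g v) has_derivative L) (at q) \<and> (\<forall>c v. L (smul3 c v) = c * L v)"
    by (intro exI[of _ "\<lambda>v. L1 v + L2 v"]) (auto intro!: has_derivative_add simp: distrib_left)
qed

lemma holo_mult: "holo S f \<Longrightarrow> holo S g \<Longrightarrow> holo S (\<lambda>v. f v * g v)"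
  unfolding holo_def
proof safe
  fix q assume "open S" "q \<in> S"
    "\<forall>q\<in>S. \<exists>L. (f has_derivative L) (at q) \<and> (\<forall>c v. L (smul3 c v) = c * L v)"
    "\<forall>q\<in>S. \<exists>L. (g has_derivative L) (at q) \<and> (\<forall>c v. L (smul3 c v) = c * L v)"
  then obtain L1 L2 where "(f has_derivative L1) (at q)" "\<forall>c v. L1 (smul3 c v) = c * L1 v"
    "(g has_derivative L2) (at q)" "\<forall>c v. L2 (smul3 c v) = c * L2 v" by blast
  then show "\<exists>L. ((\<lambda>v. f v * g v) has_derivative L) (at q) \<and> (\<forall>c v. L (smul3 c v) = c * L v)"
  proof (intro exI conjI)
    show "((\<lambda>v. f v * g v) has_derivative (\<lambda>h. f q * L2 h + L1 h * g q)) (at q)"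
      by (rule has_derivative_mult) fact+
  qed (auto simp: algebra_simps)
qed

lemma holo_inverse: "holo S f \<Longrightarrow> (\<forall>q\<in>S. f q \<noteq> 0) \<Longrightarrow> holo S (\<lambda>v. inverse (f v))"
  unfolding holo_def
proof safe
  fix q assume "open S" "q \<in> S" "\<forall>q\<in>S. f q \<noteq> 0"
    "\<forall>q\<in>S. \<exists>L. (f has_derivative L) (at q) \<and> (\<forall>c v. L (smul3 c v) = c * L v)"
  then obtain L1 where "(f has_derivative L1) (at q)" "\<forall>c v. L1 (smul3 c v) = c * L1 v" "f q \<noteq> 0" by blast
  then show "\<exists>L. ((\<lambda>v. inverse (f v)) has_derivative L) (at q) \<and> (\<forall>c v. L (smul3 c v) = c * L v)"
  proof (intro exI conjI)
    show "((\<lambda>v. inverse (f v)) has_derivative (\<lambda>h. - (inverse (f q) * L1 h * inverse (f q)))) (at q)"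
      by (rule Deriv.has_derivative_inverse) fact+
  qed (auto simp: algebra_simps)
qed

lemma holo_compose3:
  assumes "holo T g" "holo S F1" "holo S F2" "holo S F3" "\<forall>q\<in>S. (F1 q, F2 q, F3 q) \<in> T"
  shows "holo S (\<lambda>q. g (F1 q, F2 q, F3 q))"
  unfolding holo_def
proof safe
  show "open S" using assms(2) by (simp add: holo_def)
  fix q assume q: "q \<in> S"
  obtain L1 L2 L3 where 1: "(F1 has_derivative L1) (at q)" "\<forall>c v. L1 (smul3 c v) = c * L1 v"
    and 2: "(F2 has_derivative L2) (at q)" "\<forall>c v. L2 (smul3 c v) = c * L2 v"
    and 3: "(F3 has_derivative L3) (at q)" "\<forall>c v. L3 (smul3 c v) = c * L3 v"
    using assms(2-4) q unfolding holo_def by meson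
  obtain L where L: "(g has_derivative L) (at (F1 q, F2 q, F3 q))" "\<forall>c v. L (smul3 c v) = c * L v"
    using assms(1,5) q unfolding holo_def by meson
  have d: "((\<lambda>q. (F1 q, F2 q, F3 q)) has_derivative (\<lambda>h. (L1 h, L2 h, L3 h))) (at q)"
    using 1 2 3 by (intro has_derivative_Pair) auto
  have "((g \<circ> (\<lambda>q. (F1 q, F2 q, F3 q))) has_derivative (L \<circ> (\<lambda>h. (L1 h, L2 h, L3 h)))) (at q)"
    by (rule diff_chain_at[OF d L(1)])
  moreover have "(L \<circ> (\<lambda>h. (L1 h, L2 h, L3 h))) (smul3 c v) = c * (L \<circ> (\<lambda>h. (L1 h, L2 h, L3 h))) v" for c v
  proof -
    have "(L1 (smul3 c v), L2 (smul3 c v), L3 (smul3 c v)) = smul3 c (L1 v, L2 v, L3 v)"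
      using 1 2 3 by (simp add: smul3_def)
    then show ?thesis using L(2) by simp
  qed
  ultimately show "\<exists>L. ((\<lambda>q. g (F1 q, F2 q, F3 q)) has_derivative L) (at q) \<and> (\<forall>c v. L (smul3 c v) = c * L v)"
    by (auto simp: o_def)
qed

lemma holo_subset: "holo S g \<Longrightarrow> open S' \<Longrightarrow> S' \<subseteq> S \<Longrightarrow> holo S' g"
  unfolding holo_def by blast

lemma holo_cong: "holo S f \<Longrightarrow> (\<And>q. q \<in> S \<Longrightarrow> f q = g q) \<Longrightarrow> holo S g"
  unfolding holo_def
  by (metis has_derivative_transform_within_open)

lemma holo_continuous_on: "holo S g \<Longrightarrow> continuous_on S g"
  unfolding holo_def
  by (metis continuous_at_imp_continuous_on has_derivative_continuous)

definition gam :: "real \<Rightarrow> real \<Rightarrow> complex" where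
  "gam R t = of_real R * exp (2 * of_real pi * \<i> * of_real t)"

lemma circlepath_gam: "circlepath 0 R = gam R"
  by (simp add: circlepath gam_def fun_eq_iff)

lemma norm_gam: "R \<ge> 0 \<Longrightarrow> norm (gam R t) = R"
  by (simp add: gam_def norm_mult)

lemma continuous_on_gam: "continuous_on A (gam R)"
  unfolding gam_def by (intro continuous_intros)

lemma cauchy1:
  assumes "G holomorphic_on A" "open A" "cball 0 R \<subseteq> A" "norm u < R"
  shows "G u = integral {0..1} (\<lambda>t. G (gam R t) * (gam R t / (gam R t - u)))"
proof -
  have "((\<lambda>w. G w/(w-u)) has_contour_integral (2 * of_real pi * \<i> * G u)) (circlepath 0 R)"
  proof (rule Cauchy_integral_circlepath)
    show "continuous_on (cball 0 R) G"
      using assms by (meson continuous_on_subset holomorphic_on_imp_continuous_on)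
    show "G holomorphic_on ball 0 R"
      using assms by (meson ball_subset_cball holomorphic_on_subset order_trans)
  qed (use assms in simp)
  then have "contour_integral (circlepath 0 R) (\<lambda>w. G w/(w-u)) = 2 * of_real pi * \<i> * G u"
    by (rule contour_integral_unique)
  then have "integral {0..1} (\<lambda>t. G (gam R t) / (gam R t - u) * vector_derivative (circlepath 0 R) (at t))
      = 2 * of_real pi * \<i> * G u"
    by (simp add: contour_integral_integral circlepath_gam)
  moreover have "(\<lambda>t. G (gam R t) / (gam R t - u) * vector_derivative (circlepath 0 R) (at t))
      = (\<lambda>t. (2 * of_real pi * \<i>) * (G (gam R t) * (gam R t / (gam R t - u))))"
    by (rule ext) (simp add: vector_derivative_circlepath gam_def)
  ultimately have "(2 * of_real pi * \<i>) * integral {0..1} (\<lambda>t. G (gam R t) * (gam R t / (gam R t - u)))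
      = (2 * of_real pi * \<i>) * G u"
    by (simp only: integral_mult_right)
  then show ?thesis by simp
qed

lemma holo_slice:
  assumes "holo S g"
  shows "(\<lambda>\<xi>. g (p + smul3 \<xi> u)) holomorphic_on {\<xi>. p + smul3 \<xi> u \<in> S}"
  unfolding holomorphic_on_def
proof
  fix \<xi> assume "\<xi> \<in> {\<xi>. p + smul3 \<xi> u \<in> S}"
  then obtain L where L: "(g has_derivative L) (at (p + smul3 \<xi> u))" "\<forall>c v. L (smul3 c v) = c * L v"
    using assms unfolding holo_def by blast
  have d: "((\<lambda>\<xi>. p + smul3 \<xi> u) has_derivative (\<lambda>h. smul3 h u)) (at \<xi>)"
    unfolding smul3_def
    by (auto intro!: derivative_eq_intros simp: fun_eq_iff)
  have "((g \<circ> (\<lambda>\<xi>. p + smul3 \<xi> u)) has_derivative (L \<circ> (\<lambda>h. smul3 h u))) (at \<xi>)"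
    by (rule diff_chain_at[OF d L(1)])
  moreover have "(L \<circ> (\<lambda>h. smul3 h u)) = (\<lambda>h. L u * h)"
  proof -
    have "\<forall>h. L (smul3 h u) = h * L u" using L(2) by blast
    then show ?thesis by (auto simp: fun_eq_iff mult.commute)
  qed
  ultimately have "((\<lambda>\<xi>. g (p + smul3 \<xi> u)) has_field_derivative L u) (at \<xi>)"
    by (simp add: has_field_derivative_def o_def)
  then show "(\<lambda>\<xi>. g (p + smul3 \<xi> u)) field_differentiable at \<xi> within {\<xi>. p + smul3 \<xi> u \<in> S}"
    using field_differentiable_at_within field_differentiable_def by blast
qed

lemma open_slice:
  assumes "open S" shows "open {\<xi>::complex. p + smul3 \<xi> u \<in> S}"
proof -
  have "continuous_on UNIV (\<lambda>\<xi>::complex. p + smul3 \<xi> u)"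
    unfolding smul3_def by (intro continuous_intros)
  then show ?thesis using assms
    by (metis (no_types) open_UNIV open_vimage vimage_def)
qed

lemma holo_slice1: "holo S g \<Longrightarrow> (\<lambda>\<xi>. g (\<xi>,b,c)) holomorphic_on {\<xi>. (\<xi>,b,c) \<in> S} \<and> open {\<xi>. (\<xi>,b,c) \<in> S}"
  using holo_slice[of S g "(0,b,c)" "(1,0,0)"] open_slice[of S "(0,b,c)" "(1,0,0)"]
  by (simp add: smul3_def holo_def)
lemma holo_slice2: "holo S g \<Longrightarrow> (\<lambda>\<xi>. g (a,\<xi>,c)) holomorphic_on {\<xi>. (a,\<xi>,c) \<in> S} \<and> open {\<xi>. (a,\<xi>,c) \<in> S}"
  using holo_slice[of S g "(a,0,c)" "(0,1,0)"] open_slice[of S "(a,0,c)" "(0,1,0)"]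
  by (simp add: smul3_def holo_def)
lemma holo_slice3: "holo S g \<Longrightarrow> (\<lambda>\<xi>. g (a,b,\<xi>)) holomorphic_on {\<xi>. (a,b,\<xi>) \<in> S} \<and> open {\<xi>. (a,b,\<xi>) \<in> S}"
  using holo_slice[of S g "(a,b,0)" "(0,0,1)"] open_slice[of S "(a,b,0)" "(0,0,1)"]
  by (simp add: smul3_def holo_def)

definition kap :: "real \<Rightarrow> complex \<Rightarrow> real \<Rightarrow> complex" where
  "kap R u t = gam R t / (gam R t - u)"

definition cube :: "(real \<times> real \<times> real) set" where
  "cube = cbox (0,0,0) (1,1,1)"

lemma gam_ne: "norm u < R \<Longrightarrow> gam R t - u \<noteq> 0"
  using norm_gam[of R t] norm_ge_zero[of u] by auto

lemma continuous_on_kap: "norm u < R \<Longrightarrow> continuous_on A (kap R u)"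
  unfolding kap_def using gam_ne[of u R]
  by (intro continuous_intros continuous_on_gam) auto

lemma triple_cauchy:
  assumes g: "holo S g" and R: "R > 0"
    and S: "\<And>a b c. norm a \<le> R \<Longrightarrow> norm b \<le> R \<Longrightarrow> norm c \<le> R \<Longrightarrow> (a,b,c) \<in> S"
    and xyz: "norm x < R" "norm y < R" "norm z < R"
  shows "g (x,y,z) = integral cube (\<lambda>(t1,t2,t3). g (gam R t1, gam R t2, gam R t3) * (kap R x t1 * kap R y t2 * kap R z t3))"
proof -
  have ng: "norm (gam R t) \<le> R" for t using norm_gam[of R t] R by simp
  have c1: "g (x,y,z) = integral {0..1} (\<lambda>t1. g (gam R t1, y, z) * kap R x t1)"
    unfolding kap_def
    using holo_slice1[OF g, of y z] xyz
    by (intro cauchy1[where A="{\<xi>. (\<xi>,y,z) \<in> S}"]) (auto intro!: S)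
  have c2: "g (gam R t1, y, z) = integral {0..1} (\<lambda>t2. g (gam R t1, gam R t2, z) * kap R y t2)" for t1
    unfolding kap_def
    using holo_slice2[OF g, of "gam R t1" z] xyz ng
    by (intro cauchy1[where A="{\<xi>. (gam R t1,\<xi>,z) \<in> S}"]) (auto intro!: S)
  have c3: "g (gam R t1, gam R t2, z) = integral {0..1} (\<lambda>t3. g (gam R t1, gam R t2, gam R t3) * kap R z t3)" for t1 t2
    unfolding kap_def
    using holo_slice3[OF g, of "gam R t1" "gam R t2"] xyz ng
    by (intro cauchy1[where A="{\<xi>. (gam R t1,gam R t2,\<xi>) \<in> S}"]) (auto intro!: S)
  define F where "F = (\<lambda>(t1,t2,t3). g (gam R t1, gam R t2, gam R t3) * (kap R x t1 * kap R y t2 * kap R z t3))"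
  have contg: "continuous_on UNIV (\<lambda>(t1::real,t2::real,t3::real). g (gam R t1, gam R t2, gam R t3))"
  proof -
    have "continuous_on UNIV (\<lambda>t::real\<times>real\<times>real. (gam R (fst t), gam R (fst (snd t)), gam R (snd (snd t))))"
      by (intro continuous_intros continuous_on_compose2[OF continuous_on_gam]) auto
    then have "continuous_on UNIV (\<lambda>t::real\<times>real\<times>real. g (gam R (fst t), gam R (fst (snd t)), gam R (snd (snd t))))"
      by (rule continuous_on_compose2[OF holo_continuous_on[OF g]]) (auto intro!: S ng)
    then show ?thesis by (simp add: case_prod_beta)
  qed
  have contF: "continuous_on UNIV F"
  proof -
    have "continuous_on UNIV (\<lambda>t::real\<times>real\<times>real. g (gam R (fst t), gam R (fst (snd t)), gam R (snd (snd t))) * (kap R x (fst t) * kap R y (fst (snd t)) * kap R z (snd (snd t))))"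
      using contg xyz
      by (intro continuous_intros continuous_on_compose2[OF continuous_on_kap]) (auto simp: case_prod_beta)
    then show ?thesis by (simp add: F_def case_prod_beta)
  qed
  have "integral cube F = integral (cbox 0 1) (\<lambda>t1. integral (cbox (0,0) (1,1)) (\<lambda>t23. F (t1, t23)))"
    unfolding cube_def by (rule integral_prod_continuous) (rule continuous_on_subset[OF contF], simp)
  also have "\<dots> = integral (cbox 0 1) (\<lambda>t1. integral (cbox 0 1) (\<lambda>t2. integral (cbox 0 1) (\<lambda>t3. F (t1, t2, t3))))"
  proof (rule integral_cong)
    fix t1 :: real
    have "continuous_on UNIV (\<lambda>t23. F (t1, t23))"
      by (rule continuous_on_compose2[OF contF]) (auto intro!: continuous_intros)
    then show "integral (cbox (0,0) (1,1)) (\<lambda>t23. F (t1, t23)) = integral (cbox 0 1) (\<lambda>t2. integral (cbox 0 1) (\<lambda>t3. F (t1, t2, t3)))"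
      by (subst integral_prod_continuous) (auto intro: continuous_on_subset)
  qed
  also have "\<dots> = g (x,y,z)"
    unfolding c1 cbox_interval
  proof (rule integral_cong)
    fix t1 :: real
    show "integral {0..1} (\<lambda>t2. integral {0..1} (\<lambda>t3. F (t1, t2, t3))) = g (gam R t1, y, z) * kap R x t1"
      unfolding c2
    proof (simp only: integral_mult_left[symmetric], rule integral_cong)
      fix t2 :: real
      show "integral {0..1} (\<lambda>t3. F (t1, t2, t3)) = g (gam R t1, gam R t2, z) * kap R y t2 * kap R x t1"
        unfolding c3
        by (simp only: integral_mult_left[symmetric], rule integral_cong) (simp add: F_def algebra_simps)
    qed
  qed
  finally show ?thesis by (simp add: F_def)
qed

definition kap1 :: "real \<Rightarrow> complex \<Rightarrow> real \<Rightarrow> complex" where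
  "kap1 R u t = 1 / (gam R t - u)"

definition GG :: "(c3 \<Rightarrow> complex) \<Rightarrow> real \<Rightarrow> real \<times> real \<times> real \<Rightarrow> complex" where
  "GG g R t = g (gam R (fst t), gam R (fst (snd t)), gam R (snd (snd t)))"

definition pd :: "real \<Rightarrow> c3 set" where "pd R = ball 0 R \<times> ball 0 R \<times> ball 0 R"

lemma open_pd: "open (pd R)" unfolding pd_def by (intro open_Times open_ball)
lemma convex_pd: "convex (pd R)" unfolding pd_def by (intro convex_Times convex_ball)
lemma pd_iff: "v \<in> pd R \<longleftrightarrow> norm (fst v) < R \<and> norm (fst (snd v)) < R \<and> norm (snd (snd v)) < R"
  unfolding pd_def by (cases v) auto

lemma cont_GG:
  assumes g: "holo S g" and R: "R > 0"
    and S: "\<And>a b c. norm a \<le> R \<Longrightarrow> norm b \<le> R \<Longrightarrow> norm c \<le> R \<Longrightarrow> (a,b,c) \<in> S"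
  shows "continuous_on A (GG g R)"
proof -
  have ng: "norm (gam R t) \<le> R" for t using norm_gam[of R t] R by simp
  have "continuous_on A (\<lambda>t::real\<times>real\<times>real. (gam R (fst t), gam R (fst (snd t)), gam R (snd (snd t))))"
    by (intro continuous_intros continuous_on_compose2[OF continuous_on_gam]) auto
  then show ?thesis unfolding GG_def
    by (rule continuous_on_compose2[OF holo_continuous_on[OF g]]) (auto intro!: S ng)
qed

lemma cont_kap2:
  assumes "continuous_on A u" "continuous_on A \<tau>" "\<forall>q\<in>A. norm (u q) < R"
  shows "continuous_on A (\<lambda>q. kap R (u q) (\<tau> q))" "continuous_on A (\<lambda>q. kap1 R (u q) (\<tau> q))"
  unfolding kap_def kap1_def using assms gam_ne
  by (auto intro!: continuous_intros continuous_on_compose2[OF continuous_on_gam])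

lemma kap1_deriv: "norm u < R \<Longrightarrow> ((\<lambda>u. kap1 R u t) has_field_derivative (kap1 R u t)^2) (at u)"
  unfolding kap1_def using gam_ne[of u R t]
  by (auto intro!: derivative_eq_intros simp: power2_eq_square field_simps)

lemma kap_deriv: "norm u < R \<Longrightarrow> ((\<lambda>u. kap R u t) has_field_derivative (kap R u t * kap1 R u t)) (at u)"
  unfolding kap1_def kap_def using gam_ne[of u R t]
  by (auto intro!: derivative_eq_intros simp: power2_eq_square field_simps)

lemma der_comp:
  assumes "(\<phi> has_field_derivative D) (at (\<pi> p))" "(\<pi> has_derivative \<pi>') (at p within U)"
  shows "((\<lambda>p. \<phi> (\<pi> p)) has_derivative (\<lambda>\<Delta>. D * \<pi>' \<Delta>)) (at p within U)"
  using has_derivative_compose[OF assms(2) assms(1)[unfolded has_field_derivative_def]] by simp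

definition HH :: "(c3 \<Rightarrow> complex) \<Rightarrow> real \<Rightarrow> c3 \<Rightarrow> real \<times> real \<times> real \<Rightarrow> complex" where
  "HH g R p t = GG g R t * ((kap1 R (fst p) (fst t) * kap R (fst (snd p)) (fst (snd t))) * kap R (snd (snd p)) (snd (snd t)))"

definition hdiv :: "(c3 \<Rightarrow> complex) \<Rightarrow> real \<Rightarrow> c3 \<Rightarrow> complex" where
  "hdiv g R p = integral cube (HH g R p)"

definition fxH :: "(c3 \<Rightarrow> complex) \<Rightarrow> real \<Rightarrow> c3 \<Rightarrow> real \<times> real \<times> real \<Rightarrow> c3 \<Rightarrow>\<^sub>L complex" where
  "fxH g R p t =
    (blinfun_mult_right (GG g R t * ((kap1 R (fst p) (fst t))\<^sup>2 * kap R (fst (snd p)) (fst (snd t)) * kap R (snd (snd p)) (snd (snd t)))) o\<^sub>L fst_blinfun)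
  + (blinfun_mult_right (GG g R t * (kap1 R (fst p) (fst t) * (kap R (fst (snd p)) (fst (snd t)) * kap1 R (fst (snd p)) (fst (snd t))) * kap R (snd (snd p)) (snd (snd t)))) o\<^sub>L (fst_blinfun o\<^sub>L snd_blinfun))
  + (blinfun_mult_right (GG g R t * (kap1 R (fst p) (fst t) * kap R (fst (snd p)) (fst (snd t)) * (kap R (snd (snd p)) (snd (snd t)) * kap1 R (snd (snd p)) (snd (snd t))))) o\<^sub>L (snd_blinfun o\<^sub>L snd_blinfun))"

lemma fxH_apply: "blinfun_apply (fxH g R p t) v =
    GG g R t * ((kap1 R (fst p) (fst t))\<^sup>2 * kap R (fst (snd p)) (fst (snd t)) * kap R (snd (snd p)) (snd (snd t))) * fst v
  + GG g R t * (kap1 R (fst p) (fst t) * (kap R (fst (snd p)) (fst (snd t)) * kap1 R (fst (snd p)) (fst (snd t))) * kap R (snd (snd p)) (snd (snd t))) * fst (snd v)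
  + GG g R t * (kap1 R (fst p) (fst t) * kap R (fst (snd p)) (fst (snd t)) * (kap R (snd (snd p)) (snd (snd t)) * kap1 R (snd (snd p)) (snd (snd t)))) * snd (snd v)"
  unfolding fxH_def by (simp add: blinfun.add_left)

lemma HH_deriv:
  assumes "p \<in> pd R"
  shows "((\<lambda>p. HH g R p t) has_derivative blinfun_apply (fxH g R p t)) (at p within U)"
proof -
  have n: "norm (fst p) < R" "norm (fst (snd p)) < R" "norm (snd (snd p)) < R" using assms pd_iff by auto
  have d1: "((\<lambda>p. kap1 R (fst p) (fst t)) has_derivative (\<lambda>\<Delta>. (kap1 R (fst p) (fst t))\<^sup>2 * fst \<Delta>)) (at p within U)"
    by (rule der_comp[where \<pi>=fst, OF kap1_deriv[OF n(1)]]) (intro derivative_intros)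
  have d2: "((\<lambda>p. kap R (fst (snd p)) (fst (snd t))) has_derivative (\<lambda>\<Delta>. (kap R (fst (snd p)) (fst (snd t)) * kap1 R (fst (snd p)) (fst (snd t))) * fst (snd \<Delta>))) (at p within U)"
    by (rule der_comp[where \<pi>="\<lambda>p. fst (snd p)", OF kap_deriv[OF n(2)]]) (intro derivative_intros)
  have d3: "((\<lambda>p. kap R (snd (snd p)) (snd (snd t))) has_derivative (\<lambda>\<Delta>. (kap R (snd (snd p)) (snd (snd t)) * kap1 R (snd (snd p)) (snd (snd t))) * snd (snd \<Delta>))) (at p within U)"
    by (rule der_comp[where \<pi>="\<lambda>p. snd (snd p)", OF kap_deriv[OF n(3)]]) (intro derivative_intros)
  show ?thesis
    unfolding HH_def
    apply (rule has_derivative_eq_rhs)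
     apply (rule has_derivative_mult[OF has_derivative_const has_derivative_mult[OF has_derivative_mult[OF d1 d2] d3]])
    apply (simp add: fun_eq_iff fxH_apply algebra_simps power2_eq_square)
    done
qed

lemma holo_hdiv:
  assumes g: "holo S g" and R: "R > 0"
    and S: "\<And>a b c. norm a \<le> R \<Longrightarrow> norm b \<le> R \<Longrightarrow> norm c \<le> R \<Longrightarrow> (a,b,c) \<in> S"
  shows "holo (pd R) (hdiv g R)"
  unfolding holo_def
proof safe
  show "open (pd R)" by (rule open_pd)
  let ?A = "pd R \<times> cube"
  have cG: "continuous_on ?A (\<lambda>q. GG g R (snd q))"
    by (rule continuous_on_compose2[OF cont_GG[OF g R S, of UNIV]]) (auto intro!: continuous_intros)
  have n: "\<forall>q\<in>?A. norm (fst (fst q)) < R" "\<forall>q\<in>?A. norm (fst (snd (fst q))) < R" "\<forall>q\<in>?A. norm (snd (snd (fst q))) < R"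
    by (auto simp: pd_iff)
  have ck: "continuous_on ?A (\<lambda>q. kap R (fst (fst q)) (fst (snd q)))"
       "continuous_on ?A (\<lambda>q. kap1 R (fst (fst q)) (fst (snd q)))"
       "continuous_on ?A (\<lambda>q. kap R (fst (snd (fst q))) (fst (snd (snd q))))"
       "continuous_on ?A (\<lambda>q. kap1 R (fst (snd (fst q))) (fst (snd (snd q))))"
       "continuous_on ?A (\<lambda>q. kap R (snd (snd (fst q))) (snd (snd (snd q))))"
       "continuous_on ?A (\<lambda>q. kap1 R (snd (snd (fst q))) (snd (snd (snd q))))"
    using n by (auto intro!: cont_kap2 continuous_intros)
  have cont: "continuous_on ?A (\<lambda>(p,t). fxH g R p t)"
    unfolding fxH_def case_prod_beta
    by (intro continuous_intros cG ck)
  have intH: "HH g R p integrable_on cube" if "p \<in> pd R" for p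
  proof -
    have "continuous_on cube (HH g R p)"
      unfolding HH_def using that
      by (intro continuous_intros cont_GG[OF g R S] cont_kap2) (auto simp: pd_iff)
    then show ?thesis unfolding cube_def by (rule integrable_continuous)
  qed
  fix p0 assume p0: "p0 \<in> pd R"
  have intF: "fxH g R p0 integrable_on cube"
  proof -
    have "continuous_on cube (\<lambda>t. (\<lambda>(p,t). fxH g R p t) (p0, t))"
      by (rule continuous_on_compose2[OF cont]) (use p0 in \<open>auto intro!: continuous_intros\<close>)
    then show ?thesis unfolding cube_def by (simp add: integrable_continuous)
  qed
  have "((\<lambda>p. integral cube (HH g R p)) has_derivative blinfun_apply (integral cube (fxH g R p0))) (at p0 within pd R)"
    unfolding cube_def
  proof (rule leibniz_rule[where fx = "fxH g R"])
    show "\<And>x t. x \<in> pd R \<Longrightarrow> t \<in> cbox (0, 0, 0) (1, 1, 1) \<Longrightarrow>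
         ((\<lambda>x. HH g R x t) has_derivative blinfun_apply (fxH g R x t)) (at x within pd R)"
      by (rule HH_deriv)
    show "\<And>x. x \<in> pd R \<Longrightarrow> HH g R x integrable_on cbox (0, 0, 0) (1, 1, 1)"
      using intH unfolding cube_def by blast
    show "continuous_on (pd R \<times> cbox (0, 0, 0) (1, 1, 1)) (\<lambda>(x, t). fxH g R x t)"
      using cont unfolding cube_def .
  qed (use p0 convex_pd in auto)
  then have D: "(hdiv g R has_derivative blinfun_apply (integral cube (fxH g R p0))) (at p0)"
    unfolding hdiv_def using at_within_open[OF p0 open_pd] by metis
  have "blinfun_apply (integral cube (fxH g R p0)) (smul3 c v) = c * blinfun_apply (integral cube (fxH g R p0)) v" for c v
  proof -
    have "blinfun_apply (integral cube (fxH g R p0)) (smul3 c v) = integral cube (\<lambda>t. blinfun_apply (fxH g R p0 t) (smul3 c v))"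
      by (rule blinfun_apply_integral[OF intF])
    also have "\<dots> = integral cube (\<lambda>t. c * blinfun_apply (fxH g R p0 t) v)"
      by (rule integral_cong) (simp add: fxH_apply smul3_def algebra_simps)
    also have "\<dots> = c * integral cube (\<lambda>t. blinfun_apply (fxH g R p0 t) v)"
      by simp
    also have "\<dots> = c * blinfun_apply (integral cube (fxH g R p0)) v"
      by (simp add: blinfun_apply_integral[OF intF])
    finally show ?thesis .
  qed
  with D show "\<exists>L. (hdiv g R has_derivative L) (at p0) \<and> (\<forall>c v. L (smul3 c v) = c * L v)"
    by blast
qed

lemma hdiv_eq:
  assumes g: "holo S g" and R: "R > 0"
    and S: "\<And>a b c. norm a \<le> R \<Longrightarrow> norm b \<le> R \<Longrightarrow> norm c \<le> R \<Longrightarrow> (a,b,c) \<in> S"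
    and xyz: "norm x < R" "norm y < R" "norm z < R"
  shows "g (x,y,z) - g (0,y,z) = x * hdiv g R (x,y,z)"
proof -
  define F where "F u t = GG g R t * (kap R u (fst t) * kap R y (fst (snd t)) * kap R z (snd (snd t)))" for u t
  have tc: "g (u,y,z) = integral cube (F u)" if "norm u < R" for u
  proof -
    have e: "(\<lambda>(t1,t2,t3). g (gam R t1, gam R t2, gam R t3) * (kap R u t1 * kap R y t2 * kap R z t3)) = F u"
      by (auto simp: F_def GG_def fun_eq_iff)
    show ?thesis using triple_cauchy[OF g R S that xyz(2,3)] unfolding e .
  qed
  have int: "F u integrable_on cube" if "norm u < R" for u
  proof -
    have "continuous_on cube (F u)"
      unfolding F_def using that xyz
      by (intro continuous_intros cont_GG[OF g R S] cont_kap2) auto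
    then show ?thesis unfolding cube_def by (rule integrable_continuous)
  qed
  have "g (x,y,z) - g (0,y,z) = integral cube (\<lambda>t. F x t - F 0 t)"
    using tc[OF xyz(1)] tc[of 0] R int[OF xyz(1)] int[of 0] by (simp add: integral_diff)
  also have "\<dots> = integral cube (\<lambda>t. x * HH g R (x,y,z) t)"
  proof (rule integral_cong)
    fix t :: "real \<times> real \<times> real"
    have ne: "gam R (fst t) \<noteq> 0" "gam R (fst t) - x \<noteq> 0"
      using gam_ne[of 0 R] gam_ne[OF xyz(1)] R by auto
    have "kap R x (fst t) - kap R 0 (fst t) = x * kap1 R x (fst t)"
      using ne unfolding kap_def kap1_def by (simp add: field_simps)
    then show "F x t - F 0 t = x * HH g R (x, y, z) t"
      unfolding F_def HH_def by (simp add: algebra_simps)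
  qed
  also have "\<dots> = x * hdiv g R (x,y,z)" by (simp add: hdiv_def)
  finally show ?thesis .
qed

lemma hol_at_const: "hol_at (\<lambda>v. k) p"
  unfolding hol_at_holo by (auto intro!: exI[of _ UNIV] holo_const)
lemma hol_at_x: "hol_at (\<lambda>v. fst v) p"
  unfolding hol_at_holo by (auto intro!: exI[of _ UNIV] holo_x)
lemma hol_at_y: "hol_at (\<lambda>v. fst (snd v)) p"
  unfolding hol_at_holo by (auto intro!: exI[of _ UNIV] holo_y)
lemma hol_at_z: "hol_at (\<lambda>v. snd (snd v)) p"
  unfolding hol_at_holo by (auto intro!: exI[of _ UNIV] holo_z)

lemma hol_at_add: "hol_at f p \<Longrightarrow> hol_at g p \<Longrightarrow> hol_at (\<lambda>v. f v + g v) p"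
  unfolding hol_at_holo
  by (metis IntI holo_add holo_open holo_subset inf_le1 inf_le2 open_Int)

lemma hol_at_mult: "hol_at f p \<Longrightarrow> hol_at g p \<Longrightarrow> hol_at (\<lambda>v. f v * g v) p"
  unfolding hol_at_holo
  by (metis IntI holo_mult holo_open holo_subset inf_le1 inf_le2 open_Int)

lemma hol_at_uminus: "hol_at f p \<Longrightarrow> hol_at (\<lambda>v. - f v) p"
  using hol_at_mult[OF hol_at_const[of "-1"], of f p] by simp

lemma hol_at_diff: "hol_at f p \<Longrightarrow> hol_at g p \<Longrightarrow> hol_at (\<lambda>v. f v - g v) p"
  using hol_at_add[of f p "\<lambda>v. - g v"] hol_at_uminus[of g p] by simp

lemma hol_at_power: "hol_at f p \<Longrightarrow> hol_at (\<lambda>v. f v ^ n) p"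
  by (induction n) (auto intro: hol_at_const hol_at_mult)

lemma hol_at_continuous: "hol_at f p \<Longrightarrow> isCont f p"
proof -
  assume "hol_at f p"
  then obtain S where S: "p \<in> S" "holo S f" unfolding hol_at_holo by blast
  show ?thesis using holo_continuous_on[OF S(2)] holo_open[OF S(2)] S(1)
    by (simp add: continuous_on_eq_continuous_at)
qed

lemma hol_at_inverse: "hol_at f p \<Longrightarrow> f p \<noteq> 0 \<Longrightarrow> hol_at (\<lambda>v. inverse (f v)) p"
proof -
  assume f: "hol_at f p" "f p \<noteq> 0"
  then obtain S where S: "p \<in> S" "holo S f" unfolding hol_at_holo by blast
  have "continuous_on S f" using holo_continuous_on[OF S(2)] .
  then have o: "open (S \<inter> f -` (-{0}))"
    using holo_open[OF S(2)] by (intro continuous_open_preimage) auto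
  have "holo (S \<inter> f -` (-{0})) f" using S(2) o by (rule holo_subset) auto
  then have h: "holo (S \<inter> f -` (-{0})) (\<lambda>v. inverse (f v))" by (rule holo_inverse) auto
  have "p \<in> S \<inter> f -` (-{0})" using S f by auto
  with h show ?thesis unfolding hol_at_holo by (intro exI conjI)
qed

lemma hol_at_divide: "hol_at f p \<Longrightarrow> hol_at g p \<Longrightarrow> g p \<noteq> 0 \<Longrightarrow> hol_at (\<lambda>v. f v / g v) p"
proof -
  assume a: "hol_at f p" "hol_at g p" "g p \<noteq> 0"
  have "hol_at (\<lambda>v. inverse (g v)) p" using a(2,3) by (rule hol_at_inverse)
  from hol_at_mult[OF a(1) this] show ?thesis by (simp add: divide_inverse)
qed

lemma hol_at_eventually: "hol_at f p \<Longrightarrow> (\<forall>\<^sub>F v in nhds p. f v = g v) \<Longrightarrow> hol_at g p"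
proof -
  assume "hol_at f p" "\<forall>\<^sub>F v in nhds p. f v = g v"
  then obtain S T where S: "p \<in> S" "holo S f" and T: "open T" "p \<in> T" "\<forall>v\<in>T. f v = g v"
    unfolding hol_at_holo eventually_nhds by blast
  have "holo (S \<inter> T) f" using S T by (intro holo_subset[OF S(2)]) (auto intro: holo_open)
  then have h: "holo (S \<inter> T) g" by (rule holo_cong) (use T in auto)
  have "p \<in> S \<inter> T" using S T by auto
  with h show ?thesis unfolding hol_at_holo by (intro exI conjI)
qed

lemma hol_at_compose3:
  assumes "hol_at g (F1 p, F2 p, F3 p)" "hol_at F1 p" "hol_at F2 p" "hol_at F3 p"
  shows "hol_at (\<lambda>q. g (F1 q, F2 q, F3 q)) p"
proof -
  obtain T where T: "(F1 p, F2 p, F3 p) \<in> T" "holo T g" using assms(1) unfolding hol_at_holo by blast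
  obtain S1 S2 S3 where S: "p \<in> S1" "holo S1 F1" "p \<in> S2" "holo S2 F2" "p \<in> S3" "holo S3 F3"
    using assms(2-4) unfolding hol_at_holo by blast
  let ?S = "S1 \<inter> S2 \<inter> S3"
  have o: "open ?S" using holo_open[OF S(2)] holo_open[OF S(4)] holo_open[OF S(6)] by auto
  have h: "holo ?S F1" "holo ?S F2" "holo ?S F3"
    using holo_subset[OF S(2) o] holo_subset[OF S(4) o] holo_subset[OF S(6) o] by auto
  have c: "continuous_on ?S (\<lambda>q. (F1 q, F2 q, F3 q))"
    using h by (intro continuous_intros holo_continuous_on)
  let ?S' = "?S \<inter> (\<lambda>q. (F1 q, F2 q, F3 q)) -` T"
  have o': "open ?S'" using continuous_open_preimage[OF c o holo_open[OF T(2)]] .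
  have "holo ?S' (\<lambda>q. g (F1 q, F2 q, F3 q))"
    using holo_subset[OF h(1) o'] holo_subset[OF h(2) o'] holo_subset[OF h(3) o']
    by (intro holo_compose3[OF T(2)]) auto
  moreover have "p \<in> ?S'" using S T by auto
  ultimately show ?thesis unfolding hol_at_holo by (intro exI conjI)
qed

lemma eventually_nhds_comp: "eventually P (nhds (f x)) \<Longrightarrow> isCont f x \<Longrightarrow> eventually (\<lambda>y. P (f y)) (nhds x)"
  by (metis filterlim_iff tendsto_at_iff_tendsto_nhds isCont_def)

lemma div_x:
  assumes "hol_at g 0" "\<forall>\<^sub>F v in nhds 0. fst v = 0 \<longrightarrow> g v = 0"
  shows "\<exists>h. hol_at h 0 \<and> (\<forall>\<^sub>F v in nhds 0. g v = fst v * h v)"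
proof -
  obtain S where S: "0 \<in> S" "holo S g" using assms(1) unfolding hol_at_holo by blast
  obtain T where T: "open T" "0 \<in> T" "\<forall>v\<in>T. fst v = 0 \<longrightarrow> g v = 0"
    using assms(2) unfolding eventually_nhds by blast
  have "open (S \<inter> T)" using S T holo_open by blast
  then obtain e where e: "e > 0" "ball 0 e \<subseteq> S \<inter> T"
    using S T by (meson IntI open_contains_ball)
  define R where "R = e / 4"
  have R: "R > 0" using e by (simp add: R_def)
  have inb: "(a,b,c) \<in> ball 0 e" if "norm a \<le> R" "norm b \<le> R" "norm c \<le> R" for a b c :: complex
  proof -
    have "norm (a,b,c) \<le> norm a + norm (b,c)" by (rule norm_Pair_le)
    also have "\<dots> \<le> norm a + (norm b + norm c)" using norm_Pair_le[of b c] by simp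
    finally show ?thesis using that e by (simp add: R_def)
  qed
  have SS: "(a,b,c) \<in> S" if "norm a \<le> R" "norm b \<le> R" "norm c \<le> R" for a b c
    using inb[OF that] e by blast
  have "hol_at (hdiv g R) 0"
    unfolding hol_at_holo using holo_hdiv[OF S(2) R SS] R by (auto simp: pd_iff intro!: exI[of _ "pd R"])
  moreover have "\<forall>\<^sub>F v in nhds 0. g v = fst v * hdiv g R v"
    unfolding eventually_nhds
  proof (intro exI[of _ "pd R"] conjI ballI)
    show "open (pd R)" by (rule open_pd)
    show "0 \<in> pd R" using R by (simp add: pd_iff)
    fix v assume v: "v \<in> pd R"
    obtain x y z where xyz: "v = (x,y,z)" by (cases v) auto
    have n: "norm x < R" "norm y < R" "norm z < R" using v xyz pd_iff by auto
    have "(0::complex,y,z) \<in> ball 0 e" using inb[of 0 y z] n R by force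
    then have "(0,y,z) \<in> T" using e by auto
    then have "g (0,y,z) = 0" using T by auto
    then show "g v = fst v * hdiv g R v"
      using hdiv_eq[OF S(2) R SS n] xyz by simp
  qed
  ultimately show ?thesis by blast
qed

lemma isCont_swap13: "isCont (\<lambda>v::c3. (snd (snd v), fst (snd v), fst v)) x"
  by (intro continuous_intros)
lemma isCont_swap12: "isCont (\<lambda>v::c3. (fst (snd v), fst v, snd (snd v))) x"
  by (intro continuous_intros)

lemma div_z:
  assumes g: "hol_at g 0" and van: "\<forall>\<^sub>F v in nhds 0. snd (snd v) = 0 \<longrightarrow> g v = 0"
  shows "\<exists>h. hol_at h 0 \<and> (\<forall>\<^sub>F v in nhds 0. g v = snd (snd v) * h v)"
proof -
  let ?sw = "\<lambda>v::c3. (snd (snd v), fst (snd v), fst v)"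
  define g' where "g' v = g (?sw v)" for v
  have "hol_at g' 0" unfolding g'_def
    by (rule hol_at_compose3) (use g in \<open>auto simp: hol_at_x hol_at_y hol_at_z zero_prod_def\<close>)
  moreover have "\<forall>\<^sub>F v in nhds 0. fst v = 0 \<longrightarrow> g' v = 0"
  proof -
    have "\<forall>\<^sub>F v in nhds (?sw 0). snd (snd v) = 0 \<longrightarrow> g v = 0" using van by (simp add: zero_prod_def)
    from eventually_nhds_comp[OF this isCont_swap13]
    show ?thesis by (rule eventually_mono) (auto simp: g'_def)
  qed
  ultimately obtain h where h: "hol_at h 0" "\<forall>\<^sub>F v in nhds 0. g' v = fst v * h v"
    using div_x by blast
  have "hol_at (\<lambda>v. h (?sw v)) 0"
    by (rule hol_at_compose3) (use h in \<open>auto simp: hol_at_x hol_at_y hol_at_z zero_prod_def\<close>)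
  moreover have "\<forall>\<^sub>F v in nhds 0. g v = snd (snd v) * h (?sw v)"
  proof -
    have "\<forall>\<^sub>F v in nhds (?sw 0). g' v = fst v * h v" using h(2) by (simp add: zero_prod_def)
    from eventually_nhds_comp[OF this isCont_swap13]
    show ?thesis by (rule eventually_mono) (auto simp: g'_def)
  qed
  ultimately show ?thesis by blast
qed

lemma div_y:
  assumes g: "hol_at g 0" and van: "\<forall>\<^sub>F v in nhds 0. fst (snd v) = 0 \<longrightarrow> g v = 0"
  shows "\<exists>h. hol_at h 0 \<and> (\<forall>\<^sub>F v in nhds 0. g v = fst (snd v) * h v)"
proof -
  let ?sw = "\<lambda>v::c3. (fst (snd v), fst v, snd (snd v))"
  define g' where "g' v = g (?sw v)" for v
  have "hol_at g' 0" unfolding g'_def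
    by (rule hol_at_compose3) (use g in \<open>auto simp: hol_at_x hol_at_y hol_at_z zero_prod_def\<close>)
  moreover have "\<forall>\<^sub>F v in nhds 0. fst v = 0 \<longrightarrow> g' v = 0"
  proof -
    have "\<forall>\<^sub>F v in nhds (?sw 0). fst (snd v) = 0 \<longrightarrow> g v = 0" using van by (simp add: zero_prod_def)
    from eventually_nhds_comp[OF this isCont_swap12]
    show ?thesis by (rule eventually_mono) (auto simp: g'_def)
  qed
  ultimately obtain h where h: "hol_at h 0" "\<forall>\<^sub>F v in nhds 0. g' v = fst v * h v"
    using div_x by blast
  have "hol_at (\<lambda>v. h (?sw v)) 0"
    by (rule hol_at_compose3) (use h in \<open>auto simp: hol_at_x hol_at_y hol_at_z zero_prod_def\<close>)
  moreover have "\<forall>\<^sub>F v in nhds 0. g v = fst (snd v) * h (?sw v)"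
  proof -
    have "\<forall>\<^sub>F v in nhds (?sw 0). g' v = fst v * h v" using h(2) by (simp add: zero_prod_def)
    from eventually_nhds_comp[OF this isCont_swap12]
    show ?thesis by (rule eventually_mono) (auto simp: g'_def)
  qed
  ultimately show ?thesis by blast
qed

lemma hol_at_sum: "finite I \<Longrightarrow> (\<And>i. i \<in> I \<Longrightarrow> hol_at (f i) p) \<Longrightarrow> hol_at (\<lambda>v. \<Sum>i\<in>I. f i v) p"
  by (induction I rule: finite_induct) (auto intro: hol_at_add hol_at_const)

lemma eventually_ne0: "hol_at D p \<Longrightarrow> D p \<noteq> 0 \<Longrightarrow> \<forall>\<^sub>F v in nhds p. D v \<noteq> 0"
  using eventually_nhds_comp[of "\<lambda>y. y \<noteq> 0" D p] hol_at_continuous t1_space_nhds[of "D p" 0]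
  by blast

lemma in_m_mult: "in_m a \<Longrightarrow> hol_at b 0 \<Longrightarrow> in_m (\<lambda>v. a v * b v)"
  unfolding in_m_def by (auto intro: hol_at_mult)

lemma in_m_add: "in_m a \<Longrightarrow> in_m b \<Longrightarrow> in_m (\<lambda>v. a v + b v)"
  unfolding in_m_def by (auto intro: hol_at_add)

lemma in_m_x: "in_m (\<lambda>v. fst v)" unfolding in_m_def by (simp add: hol_at_x)
lemma in_m_y: "in_m (\<lambda>v. fst (snd v))" unfolding in_m_def by (simp add: hol_at_y)
lemma in_m_z: "in_m (\<lambda>v. snd (snd v))" unfolding in_m_def by (simp add: hol_at_z)

lemma in_m2_prod: "in_m a \<Longrightarrow> in_m b \<Longrightarrow> in_m2 (\<lambda>v. a v * b v)"
  unfolding in_m2_def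
  by (intro exI[of _ 1] exI[of _ "\<lambda>_. a"] exI[of _ "\<lambda>_. b"]) auto

lemma sum_split_add: "(\<Sum>i<n+k. F i) = (\<Sum>i<n. F i) + (\<Sum>i<k. F (n + i))" for F :: "nat \<Rightarrow> complex"
  by (induction k) (auto simp: add.assoc)

lemma in_m2_add:
  assumes "in_m2 f" "in_m2 g" shows "in_m2 (\<lambda>v. f v + g v)"
proof -
  obtain n :: nat and a b where 1: "\<forall>i<n. in_m (a i) \<and> in_m (b i)" "\<forall>\<^sub>F v in nhds 0. f v = (\<Sum>i<n. a i v * b i v)"
    using assms(1) unfolding in_m2_def by blast
  obtain k :: nat and a' b' where 2: "\<forall>i<k. in_m (a' i) \<and> in_m (b' i)" "\<forall>\<^sub>F v in nhds 0. g v = (\<Sum>i<k. a' i v * b' i v)"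
    using assms(2) unfolding in_m2_def by blast
  define A where "A i = (if i < n then a i else a' (i - n))" for i
  define B where "B i = (if i < n then b i else b' (i - n))" for i
  have "\<forall>i<n+k. in_m (A i) \<and> in_m (B i)" using 1(1) 2(1) by (auto simp: A_def B_def)
  moreover have "\<forall>\<^sub>F v in nhds 0. f v + g v = (\<Sum>i<n+k. A i v * B i v)"
    using 1(2) 2(2)
  proof eventually_elim
    case (elim v)
    have "(\<Sum>i<n+k. A i v * B i v) = (\<Sum>i<n. A i v * B i v) + (\<Sum>i<k. A (n + i) v * B (n + i) v)"
      by (rule sum_split_add)
    also have "\<dots> = (\<Sum>i<n. a i v * b i v) + (\<Sum>i<k. a' i v * b' i v)"
      by (simp add: A_def B_def)
    finally show ?case using elim by simp
  qed
  ultimately show ?thesis unfolding in_m2_def by blast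
qed

lemma in_m2_cong: assumes "in_m2 f" "\<forall>\<^sub>F v in nhds 0. f v = g v" shows "in_m2 g"
proof -
  obtain n :: nat and a b where 1: "\<forall>i<n. in_m (a i) \<and> in_m (b i)" "\<forall>\<^sub>F v in nhds 0. f v = (\<Sum>i<n. a i v * b i v)"
    using assms(1) unfolding in_m2_def by blast
  have "\<forall>\<^sub>F v in nhds 0. g v = (\<Sum>i<n. a i v * b i v)"
    using 1(2) assms(2) by eventually_elim simp
  then show ?thesis using 1(1) unfolding in_m2_def by blast
qed

lemma chart1_eq: "chart1 v = (fst v, fst v * fst (snd v), fst v * snd (snd v))"
  by (cases v) (simp add: chart1_def)
lemma chart2_eq: "chart2 v = (fst (snd v) * fst v, fst (snd v), fst (snd v) * snd (snd v))"
  by (cases v) (simp add: chart2_def)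
lemma chart3_eq: "chart3 v = (fst v * snd (snd v), fst (snd v) * snd (snd v), snd (snd v))"
  by (cases v) (simp add: chart3_def)

lemma hol_at_0_comp: "hol_at a 0 \<Longrightarrow> hol_at F1 0 \<Longrightarrow> hol_at F2 0 \<Longrightarrow> hol_at F3 0 \<Longrightarrow>
   F1 0 = 0 \<Longrightarrow> F2 0 = 0 \<Longrightarrow> F3 0 = 0 \<Longrightarrow> hol_at (\<lambda>v. a (F1 v, F2 v, F3 v)) 0"
  by (rule hol_at_compose3) (auto simp: zero_prod_def)

lemma m_chart1: assumes "in_m a" shows "\<exists>h. hol_at h 0 \<and> (\<forall>\<^sub>F v in nhds 0. a (chart1 v) = fst v * h v)"
proof -
  have h: "hol_at (\<lambda>v. a (chart1 v)) 0" unfolding chart1_eq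
    by (rule hol_at_0_comp) (use assms in \<open>auto simp: in_m_def intro!: hol_at_mult hol_at_x hol_at_y hol_at_z\<close>)
  have "\<forall>\<^sub>F v in nhds 0. fst v = 0 \<longrightarrow> a (chart1 v) = 0"
    using assms by (intro always_eventually) (auto simp: chart1_eq in_m_def zero_prod_def)
  then show ?thesis using h by (intro div_x)
qed

lemma m_chart2: assumes "in_m a" shows "\<exists>h. hol_at h 0 \<and> (\<forall>\<^sub>F v in nhds 0. a (chart2 v) = fst (snd v) * h v)"
proof -
  have h: "hol_at (\<lambda>v. a (chart2 v)) 0" unfolding chart2_eq
    by (rule hol_at_0_comp) (use assms in \<open>auto simp: in_m_def intro!: hol_at_mult hol_at_x hol_at_y hol_at_z\<close>)
  have "\<forall>\<^sub>F v in nhds 0. fst (snd v) = 0 \<longrightarrow> a (chart2 v) = 0"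
    using assms by (intro always_eventually) (auto simp: chart2_eq in_m_def zero_prod_def)
  then show ?thesis using h by (intro div_y)
qed

lemma m_chart3: assumes "in_m a" shows "\<exists>h. hol_at h 0 \<and> (\<forall>\<^sub>F v in nhds 0. a (chart3 v) = snd (snd v) * h v)"
proof -
  have h: "hol_at (\<lambda>v. a (chart3 v)) 0" unfolding chart3_eq
    by (rule hol_at_0_comp) (use assms in \<open>auto simp: in_m_def intro!: hol_at_mult hol_at_x hol_at_y hol_at_z\<close>)
  have "\<forall>\<^sub>F v in nhds 0. snd (snd v) = 0 \<longrightarrow> a (chart3 v) = 0"
    using assms by (intro always_eventually) (auto simp: chart3_eq in_m_def zero_prod_def)
  then show ?thesis using h by (intro div_z)
qed

lemma isCont_chart1: "isCont chart1 x" unfolding chart1_eq[abs_def] by (intro continuous_intros)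
lemma isCont_chart2: "isCont chart2 x" unfolding chart2_eq[abs_def] by (intro continuous_intros)
lemma isCont_chart3: "isCont chart3 x" unfolding chart3_eq[abs_def] by (intro continuous_intros)
lemma chart_0: "chart1 0 = 0" "chart2 0 = 0" "chart3 0 = 0"
  by (simp_all add: chart1_eq chart2_eq chart3_eq zero_prod_def)

lemma m2_chart:
  assumes \<sigma>: "isCont \<sigma> 0" "\<sigma> 0 = 0"
    and dv: "\<And>a. in_m a \<Longrightarrow> \<exists>h. hol_at h 0 \<and> (\<forall>\<^sub>F v in nhds 0. a (\<sigma> v) = \<kappa> v * h v)"
    and P: "in_m2 P"
  shows "\<exists>h. hol_at h 0 \<and> (\<forall>\<^sub>F v in nhds 0. P (\<sigma> v) = \<kappa> v * \<kappa> v * h v)"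
proof -
  obtain n :: nat and a b where ab: "\<forall>i<n. in_m (a i) \<and> in_m (b i)" "\<forall>\<^sub>F v in nhds 0. P v = (\<Sum>i<n. a i v * b i v)"
    using P unfolding in_m2_def by blast
  have "\<forall>i\<in>{..<n}. \<exists>h. hol_at h 0 \<and> (\<forall>\<^sub>F v in nhds 0. a i (\<sigma> v) = \<kappa> v * h v)"
    using ab(1) dv by auto
  then obtain A where A: "\<forall>i\<in>{..<n}. hol_at (A i) 0 \<and> (\<forall>\<^sub>F v in nhds 0. a i (\<sigma> v) = \<kappa> v * A i v)"
    by (metis bchoice)
  have "\<forall>i\<in>{..<n}. \<exists>h. hol_at h 0 \<and> (\<forall>\<^sub>F v in nhds 0. b i (\<sigma> v) = \<kappa> v * h v)"
    using ab(1) dv by auto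
  then obtain B where B: "\<forall>i\<in>{..<n}. hol_at (B i) 0 \<and> (\<forall>\<^sub>F v in nhds 0. b i (\<sigma> v) = \<kappa> v * B i v)"
    by (metis bchoice)
  have "hol_at (\<lambda>v. \<Sum>i<n. A i v * B i v) 0"
    using A B by (intro hol_at_sum hol_at_mult) auto
  moreover have "\<forall>\<^sub>F v in nhds 0. P (\<sigma> v) = \<kappa> v * \<kappa> v * (\<Sum>i<n. A i v * B i v)"
  proof -
    have e1: "\<forall>\<^sub>F v in nhds 0. P (\<sigma> v) = (\<Sum>i<n. a i (\<sigma> v) * b i (\<sigma> v))"
      using eventually_nhds_comp[of _ \<sigma> 0, OF _ \<sigma>(1)] ab(2) \<sigma>(2) by simp
    have e2: "\<forall>\<^sub>F v in nhds 0. \<forall>i\<in>{..<n}. a i (\<sigma> v) = \<kappa> v * A i v \<and> b i (\<sigma> v) = \<kappa> v * B i v"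
      using A B by (intro eventually_ball_finite) (auto intro: eventually_conj)
    show ?thesis using e1 e2
    proof eventually_elim
      case (elim v)
      then have "P (\<sigma> v) = (\<Sum>i<n. (\<kappa> v * A i v) * (\<kappa> v * B i v))" by simp
      also have "\<dots> = \<kappa> v * \<kappa> v * (\<Sum>i<n. A i v * B i v)"
        by (simp add: sum_distrib_left algebra_simps)
      finally show ?case .
    qed
  qed
  ultimately show ?thesis by blast
qed

lemma dens1:
  assumes g: "hol_at g 0" and g0: "hol_at g0 0"
    and ev: "\<forall>\<^sub>F v in nhds 0. \<kappa> v \<noteq> 0 \<longrightarrow> g v = g0 v"
    and lin: "\<And>v e. \<kappa> (v + smul3 e u) = \<kappa> v + e"
  shows "\<forall>\<^sub>F v in nhds 0. g v = g0 v"
proof -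
  obtain S1 where S1: "0 \<in> S1" "holo S1 g" using g unfolding hol_at_holo by blast
  obtain S2 where S2: "0 \<in> S2" "holo S2 g0" using g0 unfolding hol_at_holo by blast
  obtain W where W: "open W" "0 \<in> W" "\<forall>v\<in>W. \<kappa> v \<noteq> 0 \<longrightarrow> g v = g0 v"
    using ev unfolding eventually_nhds by blast
  let ?V = "S1 \<inter> S2 \<inter> W"
  have oV: "open ?V" using S1 S2 W holo_open by blast
  have "\<forall>v\<in>?V. g v = g0 v"
  proof
    fix v assume v: "v \<in> ?V"
    show "g v = g0 v"
    proof (cases "\<kappa> v = 0")
      case False then show ?thesis using v W by auto
    next
      case True
      define l where "l e = v + smul3 e u" for e
      have cl: "isCont l 0" unfolding l_def smul3_def by (intro continuous_intros)
      have l0: "l 0 = v" by (simp add: l_def smul3_def zero_prod_def)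
      have cg: "isCont g v" using holo_continuous_on[OF S1(2)] holo_open[OF S1(2)] v
        by (simp add: continuous_on_eq_continuous_at)
      have cg0: "isCont g0 v" using holo_continuous_on[OF S2(2)] holo_open[OF S2(2)] v
        by (simp add: continuous_on_eq_continuous_at)
      have t1: "((\<lambda>e. g (l e)) \<longlongrightarrow> g v) (at 0)"
        using isCont_tendsto_compose[OF cg, of l "at 0"] cl l0 unfolding isCont_def by simp
      have t2: "((\<lambda>e. g0 (l e)) \<longlongrightarrow> g0 v) (at 0)"
        using isCont_tendsto_compose[OF cg0, of l "at 0"] cl l0 unfolding isCont_def by simp
      have "\<forall>\<^sub>F e in nhds 0. l e \<in> ?V"
        using eventually_nhds_comp[of "\<lambda>w. w \<in> ?V" l 0] cl l0 oV v eventually_nhds_in_open by force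
      then have "\<forall>\<^sub>F e in at (0::complex). l e \<in> ?V"
        unfolding eventually_at_filter by (rule eventually_mono) auto
      moreover have "\<forall>\<^sub>F e in at (0::complex). e \<noteq> 0"
        by (simp add: eventually_at_filter)
      ultimately have "\<forall>\<^sub>F e in at (0::complex). g (l e) = g0 (l e)"
      proof eventually_elim
        case (elim e)
        have "\<kappa> (l e) = e" using True lin by (simp add: l_def)
        then show ?case using elim W by auto
      qed
      then have t1': "((\<lambda>e. g0 (l e)) \<longlongrightarrow> g v) (at 0)"
        by (rule Lim_transform_eventually[OF t1])
      show ?thesis using tendsto_unique[OF at_neq_bot t1' t2] .
    qed
  qed
  then show ?thesis unfolding eventually_nhds using oV S1 S2 W by blast
qed

lemma alg1:
  fixes u r X p p0 \<rho> lam D \<alpha> :: complex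
  assumes D: "D \<noteq> 0" and DD: "D = 1 + X*r*\<rho>" and p0: "p0 = lam * \<alpha>"
  shows "(u - \<alpha> * r + X*(lam*(u - \<alpha>*r) + r*p))/D
     = u + X*(lam*u + (u*(lam*(1-D)/D) + r*((p - p0)/D) + (u - \<alpha>*r)*(-(r*\<rho>)/D) + r*(\<alpha>*r*\<rho>))) - \<alpha>*(r + X*r*(r*\<rho>))"
proof -
  have "(u - \<alpha> * r + X*(lam*(u - \<alpha>*r) + r*p)) = 
     (u + X*(lam*u + (u*(lam*(1-D)/D) + r*((p - p0)/D) + (u - \<alpha>*r)*(-(r*\<rho>)/D) + r*(\<alpha>*r*\<rho>))) - \<alpha>*(r + X*r*(r*\<rho>))) * D"
    using D by (simp add: algebra_simps diff_divide_distrib add_divide_distrib) (simp add: DD p0 algebra_simps)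
  then show ?thesis using D by (simp add: divide_eq_eq)
qed

lemma alg_corner:
  fixes y m P R lam E :: complex
  assumes "E \<noteq> 0" "E = 1 + m*(lam + P)"
  shows "y*(1 + m*R)/E = y + m*(y*(-lam + (R - P + lam*m*(lam+P))/E))"
  using assms by (simp add: field_simps) 

lemma alg_corner2:
  fixes z m P Q mu lam E :: complex
  assumes "E \<noteq> 0" "E = 1 + m*(lam + P)"
  shows "(z + m*(mu*z + Q))/E = z + m*((mu*z + Q - z*(lam + P))/E)"
  using assms by (simp add: field_simps)

lemma hol3_isCont: "hol3_at F p \<Longrightarrow> isCont F p"
proof -
  assume "hol3_at F p"
  then have "isCont (\<lambda>v. fst (F v)) p" "isCont (\<lambda>v. fst (snd (F v))) p" "isCont (\<lambda>v. snd (snd (F v))) p"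
    unfolding hol3_at_def by (auto intro: hol_at_continuous)
  then have "isCont (\<lambda>v. (fst (F v), fst (snd (F v)), snd (snd (F v)))) p"
    by - (rule continuous_Pair, assumption, rule continuous_Pair, assumption+)
  then show ?thesis by simp
qed

lemma lift_unique:
  assumes G: "hol3_at G 0" and G0: "hol3_at G0 0"
    and eq: "\<forall>\<^sub>F v in nhds 0. \<sigma> (G v) = \<sigma> (G0 v)"
    and inj: "\<And>w w'. \<sigma> w = \<sigma> w' \<Longrightarrow> \<kappa> w' \<noteq> 0 \<Longrightarrow> w = w'"
    and nz: "\<forall>\<^sub>F v in nhds 0. \<kappa> v \<noteq> 0 \<longrightarrow> \<kappa> (G0 v) \<noteq> 0"
    and lin: "\<And>v e. \<kappa> (v + smul3 e u) = \<kappa> v + e"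
  shows "\<forall>\<^sub>F v in nhds 0. G v = G0 v"
proof -
  have ev: "\<forall>\<^sub>F v in nhds 0. \<kappa> v \<noteq> 0 \<longrightarrow> G v = G0 v"
    using eq nz by eventually_elim (auto intro: inj)
  have e1: "\<forall>\<^sub>F v in nhds 0. fst (G v) = fst (G0 v)"
    using G G0 unfolding hol3_at_def by (intro dens1[OF _ _ _ lin]) (auto intro: eventually_mono[OF ev])
  have e2: "\<forall>\<^sub>F v in nhds 0. fst (snd (G v)) = fst (snd (G0 v))"
    using G G0 unfolding hol3_at_def by (intro dens1[OF _ _ _ lin]) (auto intro: eventually_mono[OF ev])
  have e3: "\<forall>\<^sub>F v in nhds 0. snd (snd (G v)) = snd (snd (G0 v))"
    using G G0 unfolding hol3_at_def by (intro dens1[OF _ _ _ lin]) (auto intro: eventually_mono[OF ev])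
  show ?thesis using e1 e2 e3 by eventually_elim (simp add: prod_eq_iff)
qed

lemma germ_transfer:
  assumes "germ_in_coords G0 0 F" "\<forall>\<^sub>F v in nhds 0. G v = G0 v"
  shows "germ_in_coords G 0 F"
proof -
  obtain \<phi> where \<phi>: "loc_coords \<phi> 0" "\<forall>\<^sub>F v in nhds 0. G0 (\<phi> v) = \<phi> (F v)"
    using assms(1) unfolding germ_in_coords_def by blast
  have "isCont \<phi> 0" "\<phi> 0 = 0" using \<phi>(1) unfolding loc_coords_def by (auto intro: hol3_isCont)
  then have "\<forall>\<^sub>F v in nhds 0. G (\<phi> v) = G0 (\<phi> v)"
    using eventually_nhds_comp[of "\<lambda>w. G w = G0 w" \<phi> 0] assms(2) by simp
  then have "\<forall>\<^sub>F v in nhds 0. G (\<phi> v) = \<phi> (F v)"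
    using \<phi>(2) by eventually_elim simp
  then show ?thesis using \<phi>(1) unfolding germ_in_coords_def by blast
qed



lemma chart3_part:
  fixes f :: "c3 \<Rightarrow> c3" and c :: nat and lam mu :: complex and P Q R :: "c3 \<Rightarrow> complex"
  assumes c: "c \<ge> 1" and lam: "lam \<noteq> 0" and mu: "\<exists>t::real. t < 0 \<and> mu = complex_of_real t * lam"
    and P: "in_m2 P" and Q: "in_m2 Q" and R: "in_m R"
    and f: "\<forall>\<^sub>F v in nhds 0. f v = spike_form c lam mu P Q R v"
  shows "(\<exists>G. is_lift chart3 f G) \<and> (\<forall>G. is_lift chart3 f G \<longrightarrow> degenerate_spike G 0)"
proof -
  have mu0: "mu \<noteq> 0" using mu lam by auto
  obtain Pt where Pt: "hol_at Pt 0" "\<forall>\<^sub>F v in nhds 0. P (chart3 v) = snd (snd v) * snd (snd v) * Pt v"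
    using m2_chart[OF isCont_chart3 chart_0(3) m_chart3 P] by blast
  obtain Qt where Qt: "hol_at Qt 0" "\<forall>\<^sub>F v in nhds 0. Q (chart3 v) = snd (snd v) * snd (snd v) * Qt v"
    using m2_chart[OF isCont_chart3 chart_0(3) m_chart3 Q] by blast
  obtain Rh where Rh: "hol_at Rh 0" "\<forall>\<^sub>F v in nhds 0. R (chart3 v) = snd (snd v) * Rh v"
    using m_chart3[OF R] by blast
  define D where "D v = 1 + snd (snd v) ^ c * snd (snd v) * Rh v" for v
  define G0 where "G0 v = ((fst v + snd (snd v) ^ c * (lam * fst v + snd (snd v) * Pt v)) / D v,
     (fst (snd v) + snd (snd v) ^ c * (mu * fst (snd v) + snd (snd v) * Qt v)) / D v,
     snd (snd v) * D v)" for v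
  have hD: "hol_at D 0" unfolding D_def
    by (intro hol_at_add hol_at_mult hol_at_power hol_at_const hol_at_z Rh(1))
  have D0: "D 0 = 1" by (simp add: D_def)
  have Dne: "\<forall>\<^sub>F v in nhds 0. D v \<noteq> 0" using eventually_ne0[OF hD] D0 by simp
  have hG0: "hol3_at G0 0" unfolding hol3_at_def G0_def using D0
    by (auto intro!: hol_at_add hol_at_mult hol_at_power hol_at_const hol_at_x hol_at_y hol_at_z Pt(1) Qt(1) hD hol_at_divide)
  have fc: "\<forall>\<^sub>F v in nhds 0. f (chart3 v) = spike_form c lam mu P Q R (chart3 v)"
    using eventually_nhds_comp[of _ chart3 0, OF _ isCont_chart3] f chart_0(3) by simp
  have lift: "\<forall>\<^sub>F v in nhds 0. chart3 (G0 v) = f (chart3 v)"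
    using fc Pt(2) Qt(2) Rh(2) Dne
  proof eventually_elim
    case (elim v)
    obtain s t r where v: "v = (s,t,r)" by (cases v) auto
    show ?case using elim unfolding v
      by (simp add: chart3_eq G0_def spike_form_def D_def field_simps)
  qed
  have isl: "is_lift chart3 f G0" unfolding is_lift_def using hG0 lift by blast
  have uniq: "\<forall>\<^sub>F v in nhds 0. G v = G0 v" if G: "is_lift chart3 f G" for G
  proof (rule lift_unique[where \<sigma>=chart3 and \<kappa>="\<lambda>v. snd (snd v)" and u="(0,0,1)"])
    show "hol3_at G 0" using G unfolding is_lift_def by blast
    show "hol3_at G0 0" by (rule hG0)
    show "\<forall>\<^sub>F v in nhds 0. chart3 (G v) = chart3 (G0 v)"
      using G lift unfolding is_lift_def by (auto elim: eventually_elim2)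
    show "\<And>w w'. chart3 w = chart3 w' \<Longrightarrow> snd (snd w') \<noteq> 0 \<Longrightarrow> w = w'"
      by (auto simp: chart3_eq prod_eq_iff)
    show "\<forall>\<^sub>F v in nhds 0. snd (snd v) \<noteq> 0 \<longrightarrow> snd (snd (G0 v)) \<noteq> 0"
      using Dne by eventually_elim (simp add: G0_def)
    show "\<And>v e. snd (snd (v + smul3 e (0, 0, 1))) = snd (snd v) + e"
      by (simp add: smul3_def)
  qed
  define \<alpha> where "\<alpha> = Pt 0 / lam"
  define \<beta> where "\<beta> = Qt 0 / mu"
  define \<phi> where "\<phi> v = (fst v - \<alpha> * snd (snd v), fst (snd v) - \<beta> * snd (snd v), snd (snd v))" for v
  define \<psi> where "\<psi> v = (fst v + \<alpha> * snd (snd v), fst (snd v) + \<beta> * snd (snd v), snd (snd v))" for v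
  have \<phi>0: "\<phi> 0 = 0" by (simp add: \<phi>_def zero_prod_def)
  have h\<phi>: "hol3_at \<phi> 0" unfolding hol3_at_def \<phi>_def
    by (auto intro!: hol_at_diff hol_at_mult hol_at_const hol_at_x hol_at_y hol_at_z)
  have h\<psi>: "hol3_at \<psi> 0" unfolding hol3_at_def \<psi>_def
    by (auto intro!: hol_at_add hol_at_mult hol_at_const hol_at_x hol_at_y hol_at_z)
  have lc: "loc_coords \<phi> 0"
    unfolding loc_coords_def
    using h\<phi> h\<psi> \<phi>0 by (intro conjI exI[of _ \<psi>]) (auto simp: \<phi>_def \<psi>_def zero_prod_def)
  have hcomp: "hol_at (\<lambda>v. h (\<phi> v)) 0" if "hol_at h 0" for h
    using that h\<phi> \<phi>0 unfolding hol3_at_def \<phi>_def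
    by (intro hol_at_0_comp) (auto simp: zero_prod_def)
  define Dp where "Dp v = D (\<phi> v)" for v
  have hDp: "hol_at Dp 0" unfolding Dp_def by (rule hcomp[OF hD])
  have Dp0: "Dp 0 = 1" by (simp add: Dp_def \<phi>0 D0)
  define P' where "P' v = fst v * (lam * (1 - Dp v) / Dp v) + snd (snd v) * ((Pt (\<phi> v) - Pt 0) / Dp v)
     + (fst v - \<alpha> * snd (snd v)) * (- (snd (snd v) * Rh (\<phi> v)) / Dp v)
     + snd (snd v) * (\<alpha> * snd (snd v) * Rh (\<phi> v))" for v
  define Q' where "Q' v = fst (snd v) * (mu * (1 - Dp v) / Dp v) + snd (snd v) * ((Qt (\<phi> v) - Qt 0) / Dp v)
     + (fst (snd v) - \<beta> * snd (snd v)) * (- (snd (snd v) * Rh (\<phi> v)) / Dp v)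
     + snd (snd v) * (\<beta> * snd (snd v) * Rh (\<phi> v))" for v
  define R' where "R' v = snd (snd v) * Rh (\<phi> v)" for v
  have hRh: "hol_at (\<lambda>v. Rh (\<phi> v)) 0" by (rule hcomp[OF Rh(1)])
  have hPt: "hol_at (\<lambda>v. Pt (\<phi> v)) 0" by (rule hcomp[OF Pt(1)])
  have hQt: "hol_at (\<lambda>v. Qt (\<phi> v)) 0" by (rule hcomp[OF Qt(1)])
  have mP': "in_m2 P'" unfolding P'_def
    using Dp0 \<phi>0
    by (intro in_m2_add in_m2_prod)
       (auto simp: in_m_def intro!: hol_at_add hol_at_diff hol_at_mult hol_at_divide hol_at_const hol_at_x hol_at_y hol_at_z hDp hRh hPt hQt hol_at_uminus)
  have mQ': "in_m2 Q'" unfolding Q'_def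
    using Dp0 \<phi>0
    by (intro in_m2_add in_m2_prod)
       (auto simp: in_m_def intro!: hol_at_add hol_at_diff hol_at_mult hol_at_divide hol_at_const hol_at_x hol_at_y hol_at_z hDp hRh hPt hQt hol_at_uminus)
  have mR': "in_m R'" unfolding R'_def in_m_def
    by (auto intro!: hol_at_mult hol_at_z hRh)
  have sp: "spike_params c lam mu P' Q' R'"
    unfolding spike_params_def using c lam mu mP' mQ' mR' by blast
  have Dpne: "\<forall>\<^sub>F v in nhds 0. Dp v \<noteq> 0" using eventually_ne0[OF hDp] Dp0 by simp
  have conj: "\<forall>\<^sub>F v in nhds 0. G0 (\<phi> v) = \<phi> (spike_form c lam mu P' Q' R' v)"
    using Dpne
  proof eventually_elim
    case (elim v)
    obtain u w r where v: "v = (u,w,r)" by (cases v) auto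
    have Dpv: "Dp v = 1 + r^c * r * Rh (\<phi> v)" by (simp add: Dp_def D_def v \<phi>_def)
    have Dphi: "D (u - \<alpha> * r, w - \<beta> * r, r) = Dp (u,w,r)" by (simp add: Dp_def \<phi>_def)
    have a1: "Pt 0 = lam * \<alpha>" using lam by (simp add: \<alpha>_def)
    have a2: "Qt 0 = mu * \<beta>" using mu0 by (simp add: \<beta>_def)
    have e1: "fst (G0 (\<phi> v)) = fst (\<phi> (spike_form c lam mu P' Q' R' v))"
      using alg1[OF elim Dpv a1, of u "Pt (\<phi> v)"]
      by (simp add: G0_def \<phi>_def spike_form_def v P'_def R'_def Dphi power_Suc2 mult.assoc)
    have e2: "fst (snd (G0 (\<phi> v))) = fst (snd (\<phi> (spike_form c lam mu P' Q' R' v)))"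
      using alg1[OF elim Dpv a2, of w "Qt (\<phi> v)"]
      by (simp add: G0_def \<phi>_def spike_form_def v Q'_def R'_def Dphi power_Suc2 mult.assoc)
    have e3: "snd (snd (G0 (\<phi> v))) = snd (snd (\<phi> (spike_form c lam mu P' Q' R' v)))"
      using Dpv by (simp add: G0_def \<phi>_def spike_form_def v R'_def Dphi power_Suc2 algebra_simps)
    show ?case using e1 e2 e3 by (simp add: prod_eq_iff)
  qed
  have gic: "germ_in_coords G0 0 (spike_form c lam mu P' Q' R')"
    unfolding germ_in_coords_def using lc conj by blast
  have "degenerate_spike G 0" if "is_lift chart3 f G" for G
    unfolding degenerate_spike_def using sp germ_transfer[OF gic uniq[OF that]] by blast
  then show ?thesis using isl by blast
qed



lemma neg_not_pos_rat: "(l::complex) \<noteq> 0 \<Longrightarrow> \<not> (\<exists>q::rat. q > 0 \<and> - l = of_rat q * l)"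
proof
  assume l: "l \<noteq> 0" and "\<exists>q::rat. q > 0 \<and> - l = of_rat q * l"
  then obtain q :: rat where q: "q > 0" "- l = of_rat q * l" by blast
  have "(of_rat q + 1) * l = of_rat q * l + l" by (simp add: distrib_right)
  also have "\<dots> = 0" by (metis q(2) add.left_inverse)
  finally have "(of_rat q + 1) * l = 0" .
  then have "(of_rat q :: complex) = of_rat (-1)" using l by (simp add: add_eq_0_iff2)
  then have "q = -1" by (simp only: of_rat_eq_iff)
  then show False using q by simp
qed

lemma chart1_part:
  fixes f :: "c3 \<Rightarrow> c3" and c :: nat and lam mu :: complex and P Q R :: "c3 \<Rightarrow> complex"
  assumes c: "c \<ge> 1" and lam: "lam \<noteq> 0"
    and P: "in_m2 P" and Q: "in_m2 Q" and R: "in_m R"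
    and f: "\<forall>\<^sub>F v in nhds 0. f v = spike_form c lam mu P Q R v"
  shows "(\<exists>G. is_lift chart1 f G) \<and> (\<forall>G. is_lift chart1 f G \<longrightarrow> simple_corner G 0)"
proof -
  obtain Pt where Pt: "hol_at Pt 0" "\<forall>\<^sub>F v in nhds 0. P (chart1 v) = fst v * fst v * Pt v"
    using m2_chart[OF isCont_chart1 chart_0(1) m_chart1 P] by blast
  obtain Qt where Qt: "hol_at Qt 0" "\<forall>\<^sub>F v in nhds 0. Q (chart1 v) = fst v * fst v * Qt v"
    using m2_chart[OF isCont_chart1 chart_0(1) m_chart1 Q] by blast
  obtain Rh where Rh: "hol_at Rh 0" "\<forall>\<^sub>F v in nhds 0. R (chart1 v) = fst v * Rh v"
    using m_chart1[OF R] by blast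
  define E where "E v = 1 + (fst v * snd (snd v)) ^ c * (lam + fst v * Pt v)" for v
  define G0 where "G0 v = (fst v * E v,
     (fst (snd v) + (fst v * snd (snd v)) ^ c * (mu * fst (snd v) + fst v * Qt v)) / E v,
     snd (snd v) * (1 + (fst v * snd (snd v)) ^ c * fst v * Rh v) / E v)" for v
  have hE: "hol_at E 0" unfolding E_def
    by (intro hol_at_add hol_at_mult hol_at_power hol_at_const hol_at_x hol_at_z Pt(1))
  have E0: "E 0 = 1" using c by (simp add: E_def)
  have Ene: "\<forall>\<^sub>F v in nhds 0. E v \<noteq> 0" using eventually_ne0[OF hE] E0 by simp
  have hG0: "hol3_at G0 0" unfolding hol3_at_def G0_def using E0
    by (auto intro!: hol_at_add hol_at_mult hol_at_power hol_at_const hol_at_x hol_at_y hol_at_z Pt(1) Qt(1) Rh(1) hE hol_at_divide)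
  have fc: "\<forall>\<^sub>F v in nhds 0. f (chart1 v) = spike_form c lam mu P Q R (chart1 v)"
    using eventually_nhds_comp[of _ chart1 0, OF _ isCont_chart1] f chart_0(1) by simp
  have lift: "\<forall>\<^sub>F v in nhds 0. chart1 (G0 v) = f (chart1 v)"
    using fc Pt(2) Qt(2) Rh(2) Ene
  proof eventually_elim
    case (elim v)
    obtain s t r where v: "v = (s,t,r)" by (cases v) auto
    show ?case using elim unfolding v
      by (simp add: chart1_eq G0_def spike_form_def E_def field_simps)
  qed
  have isl: "is_lift chart1 f G0" unfolding is_lift_def using hG0 lift by blast
  have uniq: "\<forall>\<^sub>F v in nhds 0. G v = G0 v" if G: "is_lift chart1 f G" for G
  proof (rule lift_unique[where \<sigma>=chart1 and \<kappa>="\<lambda>v. fst v" and u="(1,0,0)"])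
    show "hol3_at G 0" using G unfolding is_lift_def by blast
    show "hol3_at G0 0" by (rule hG0)
    show "\<forall>\<^sub>F v in nhds 0. chart1 (G v) = chart1 (G0 v)"
      using G lift unfolding is_lift_def by (auto elim: eventually_elim2)
    show "\<And>w w'. chart1 w = chart1 w' \<Longrightarrow> fst w' \<noteq> 0 \<Longrightarrow> w = w'"
      by (auto simp: chart1_eq prod_eq_iff)
    show "\<forall>\<^sub>F v in nhds 0. fst v \<noteq> 0 \<longrightarrow> fst (G0 v) \<noteq> 0"
      using Ene by eventually_elim (simp add: G0_def)
    show "\<And>v e. fst (v + smul3 e (1, 0, 0)) = fst v + e"
      by (simp add: smul3_def)
  qed
  define \<phi> where "\<phi> v = (fst v, snd (snd v), fst (snd v))" for v :: c3
  have \<phi>0: "\<phi> 0 = 0" by (simp add: \<phi>_def zero_prod_def)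
  have h\<phi>: "hol3_at \<phi> 0" unfolding hol3_at_def \<phi>_def
    by (auto intro!: hol_at_x hol_at_y hol_at_z)
  have lc: "loc_coords \<phi> 0"
    unfolding loc_coords_def
    using h\<phi> \<phi>0 by (intro conjI exI[of _ \<phi>]) (auto simp: \<phi>_def zero_prod_def)
  have hcomp: "hol_at (\<lambda>v. h (\<phi> v)) 0" if "hol_at h 0" for h
    using that h\<phi> \<phi>0 unfolding hol3_at_def \<phi>_def
    by (intro hol_at_0_comp) (auto simp: zero_prod_def)
  define Ep where "Ep v = E (\<phi> v)" for v
  have hEp: "hol_at Ep 0" unfolding Ep_def by (rule hcomp[OF hE])
  have Ep0: "Ep 0 = 1" by (simp add: Ep_def \<phi>0 E0)
  have hRh: "hol_at (\<lambda>v. Rh (\<phi> v)) 0" by (rule hcomp[OF Rh(1)])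
  have hPt: "hol_at (\<lambda>v. Pt (\<phi> v)) 0" by (rule hcomp[OF Pt(1)])
  have hQt: "hol_at (\<lambda>v. Qt (\<phi> v)) 0" by (rule hcomp[OF Qt(1)])
  define m where "m v = (fst v * fst (snd v)) ^ c" for v :: c3
  define P' where "P' v = fst v * Pt (\<phi> v)" for v
  define Q' where "Q' v = (fst v * Rh (\<phi> v) - fst v * Pt (\<phi> v) + lam * m v * (lam + fst v * Pt (\<phi> v))) / Ep v" for v
  define R' where "R' v = (mu * snd (snd v) + fst v * Qt (\<phi> v) - snd (snd v) * (lam + fst v * Pt (\<phi> v))) / Ep v" for v
  have mP': "in_m P'" unfolding P'_def in_m_def
    by (auto intro!: hol_at_mult hol_at_x hPt)
  have mQ': "in_m Q'" unfolding Q'_def in_m_def m_def using Ep0 c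
    by (auto intro!: hol_at_add hol_at_diff hol_at_mult hol_at_divide hol_at_power hol_at_const hol_at_x hol_at_y hol_at_z hEp hRh hPt)
  have mR': "in_m R'" unfolding R'_def in_m_def using Ep0
    by (auto intro!: hol_at_add hol_at_diff hol_at_mult hol_at_divide hol_at_const hol_at_x hol_at_y hol_at_z hEp hQt hPt)
  have Epne: "\<forall>\<^sub>F v in nhds 0. Ep v \<noteq> 0" using eventually_ne0[OF hEp] Ep0 by simp
  have conj: "\<forall>\<^sub>F v in nhds 0. G0 (\<phi> v) = \<phi> (corner_form c c 0 lam (-lam) P' Q' R' v)"
    using Epne
  proof eventually_elim
    case (elim v)
    obtain x y z where v: "v = (x,y,z)" by (cases v) auto
    have Epv: "Ep v = 1 + m v * (lam + x * Pt (\<phi> v))"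
      by (simp add: Ep_def E_def v \<phi>_def m_def)
    have Ephi: "E (x, z, y) = Ep (x,y,z)" by (simp add: Ep_def \<phi>_def)
    have mv: "m v = x ^ c * y ^ c" by (simp add: m_def v power_mult_distrib)
    have l1: "fst (G0 (\<phi> v)) = x * Ep v"
      by (simp add: G0_def \<phi>_def v Ephi)
    have r1: "fst (\<phi> (corner_form c c 0 lam (-lam) P' Q' R' v)) = x + m v * (x * (lam + x * Pt (\<phi> v)))"
      by (simp add: \<phi>_def corner_form_def v mv[symmetric] Let_def P'_def)
    have e1: "fst (G0 (\<phi> v)) = fst (\<phi> (corner_form c c 0 lam (-lam) P' Q' R' v))"
      unfolding l1 r1 Epv by (simp add: algebra_simps)
    have l2: "snd (snd (G0 (\<phi> v))) = y * (1 + m v * (x * Rh (\<phi> v))) / Ep v"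
      by (simp add: G0_def \<phi>_def v Ephi m_def mult.assoc)
    have r2: "snd (snd (\<phi> (corner_form c c 0 lam (-lam) P' Q' R' v))) = y + m v * (y * (-lam + Q' v))"
      by (simp add: \<phi>_def corner_form_def v mv[symmetric] Let_def)
    have e2: "snd (snd (G0 (\<phi> v))) = snd (snd (\<phi> (corner_form c c 0 lam (-lam) P' Q' R' v)))"
      unfolding l2 r2 Q'_def using alg_corner[OF elim Epv, of y "x * Rh (\<phi> v)"] by (simp add: v)
    have l3: "fst (snd (G0 (\<phi> v))) = (z + m v * (mu * z + x * Qt (\<phi> v))) / Ep v"
      by (simp add: G0_def \<phi>_def v Ephi m_def mult.assoc)
    have r3: "fst (snd (\<phi> (corner_form c c 0 lam (-lam) P' Q' R' v))) = z + m v * R' v"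
      by (simp add: \<phi>_def corner_form_def v mv[symmetric] Let_def)
    have e3: "fst (snd (G0 (\<phi> v))) = fst (snd (\<phi> (corner_form c c 0 lam (-lam) P' Q' R' v)))"
      unfolding l3 r3 R'_def using alg_corner2[OF elim Epv, of z mu "x * Qt (\<phi> v)"] by (simp add: v)
    show ?case using e1 e2 e3 by (simp add: prod_eq_iff)
  qed
  have gic: "germ_in_coords G0 0 (corner_form c c 0 lam (-lam) P' Q' R')"
    unfolding germ_in_coords_def using lc conj by blast
  have "simple_corner G 0" if "is_lift chart1 f G" for G
    unfolding simple_corner_def
    using c lam neg_not_pos_rat[OF lam] mP' mQ' mR' germ_transfer[OF gic uniq[OF that]]
    by (intro exI[of _ c] exI[of _ 0] exI[of _ lam] exI[of _ "-lam"] exI[of _ P'] exI[of _ Q'] exI[of _ R']) simp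
  then show ?thesis using isl by blast
qed



lemma chart2_part:
  fixes f :: "c3 \<Rightarrow> c3" and c :: nat and lam mu :: complex and P Q R :: "c3 \<Rightarrow> complex"
  assumes c: "c \<ge> 1" and mu0: "mu \<noteq> 0"
    and P: "in_m2 P" and Q: "in_m2 Q" and R: "in_m R"
    and f: "\<forall>\<^sub>F v in nhds 0. f v = spike_form c lam mu P Q R v"
  shows "(\<exists>G. is_lift chart2 f G) \<and> (\<forall>G. is_lift chart2 f G \<longrightarrow> simple_corner G 0)"
proof -
  obtain Pt where Pt: "hol_at Pt 0" "\<forall>\<^sub>F v in nhds 0. P (chart2 v) = fst (snd v) * fst (snd v) * Pt v"
    using m2_chart[OF isCont_chart2 chart_0(2) m_chart2 P] by blast
  obtain Qt where Qt: "hol_at Qt 0" "\<forall>\<^sub>F v in nhds 0. Q (chart2 v) = fst (snd v) * fst (snd v) * Qt v"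
    using m2_chart[OF isCont_chart2 chart_0(2) m_chart2 Q] by blast
  obtain Rh where Rh: "hol_at Rh 0" "\<forall>\<^sub>F v in nhds 0. R (chart2 v) = fst (snd v) * Rh v"
    using m_chart2[OF R] by blast
  define E where "E v = 1 + (fst (snd v) * snd (snd v)) ^ c * (mu + fst (snd v) * Qt v)" for v
  define G0 where "G0 v = ((fst v + (fst (snd v) * snd (snd v)) ^ c * (lam * fst v + fst (snd v) * Pt v)) / E v,
     fst (snd v) * E v,
     snd (snd v) * (1 + (fst (snd v) * snd (snd v)) ^ c * fst (snd v) * Rh v) / E v)" for v
  have hE: "hol_at E 0" unfolding E_def
    by (intro hol_at_add hol_at_mult hol_at_power hol_at_const hol_at_y hol_at_z Qt(1))
  have E0: "E 0 = 1" using c by (simp add: E_def)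
  have Ene: "\<forall>\<^sub>F v in nhds 0. E v \<noteq> 0" using eventually_ne0[OF hE] E0 by simp
  have hG0: "hol3_at G0 0" unfolding hol3_at_def G0_def using E0
    by (auto intro!: hol_at_add hol_at_mult hol_at_power hol_at_const hol_at_x hol_at_y hol_at_z Pt(1) Qt(1) Rh(1) hE hol_at_divide)
  have fc: "\<forall>\<^sub>F v in nhds 0. f (chart2 v) = spike_form c lam mu P Q R (chart2 v)"
    using eventually_nhds_comp[of _ chart2 0, OF _ isCont_chart2] f chart_0(2) by simp
  have lift: "\<forall>\<^sub>F v in nhds 0. chart2 (G0 v) = f (chart2 v)"
    using fc Pt(2) Qt(2) Rh(2) Ene
  proof eventually_elim
    case (elim v)
    obtain s t r where v: "v = (s,t,r)" by (cases v) auto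
    show ?case using elim unfolding v
      by (simp add: chart2_eq G0_def spike_form_def E_def field_simps)
  qed
  have isl: "is_lift chart2 f G0" unfolding is_lift_def using hG0 lift by blast
  have uniq: "\<forall>\<^sub>F v in nhds 0. G v = G0 v" if G: "is_lift chart2 f G" for G
  proof (rule lift_unique[where \<sigma>=chart2 and \<kappa>="\<lambda>v. fst (snd v)" and u="(0,1,0)"])
    show "hol3_at G 0" using G unfolding is_lift_def by blast
    show "hol3_at G0 0" by (rule hG0)
    show "\<forall>\<^sub>F v in nhds 0. chart2 (G v) = chart2 (G0 v)"
      using G lift unfolding is_lift_def by (auto elim: eventually_elim2)
    show "\<And>w w'. chart2 w = chart2 w' \<Longrightarrow> fst (snd w') \<noteq> 0 \<Longrightarrow> w = w'"
      by (auto simp: chart2_eq prod_eq_iff)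
    show "\<forall>\<^sub>F v in nhds 0. fst (snd v) \<noteq> 0 \<longrightarrow> fst (snd (G0 v)) \<noteq> 0"
      using Ene by eventually_elim (simp add: G0_def)
    show "\<And>v e. fst (snd (v + smul3 e (0, 1, 0))) = fst (snd v) + e"
      by (simp add: smul3_def)
  qed
  define \<phi> where "\<phi> v = (snd (snd v), fst v, fst (snd v))" for v :: c3
  define \<psi> where "\<psi> v = (fst (snd v), snd (snd v), fst v)" for v :: c3
  have \<phi>0: "\<phi> 0 = 0" by (simp add: \<phi>_def zero_prod_def)
  have h\<phi>: "hol3_at \<phi> 0" unfolding hol3_at_def \<phi>_def
    by (auto intro!: hol_at_x hol_at_y hol_at_z)
  have h\<psi>: "hol3_at \<psi> 0" unfolding hol3_at_def \<psi>_def
    by (auto intro!: hol_at_x hol_at_y hol_at_z)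
  have lc: "loc_coords \<phi> 0"
    unfolding loc_coords_def
    using h\<phi> h\<psi> \<phi>0 by (intro conjI exI[of _ \<psi>]) (auto simp: \<phi>_def \<psi>_def zero_prod_def)
  have hcomp: "hol_at (\<lambda>v. h (\<phi> v)) 0" if "hol_at h 0" for h
    using that h\<phi> \<phi>0 unfolding hol3_at_def \<phi>_def
    by (intro hol_at_0_comp) (auto simp: zero_prod_def)
  define Ep where "Ep v = E (\<phi> v)" for v
  have hEp: "hol_at Ep 0" unfolding Ep_def by (rule hcomp[OF hE])
  have Ep0: "Ep 0 = 1" by (simp add: Ep_def \<phi>0 E0)
  have hRh: "hol_at (\<lambda>v. Rh (\<phi> v)) 0" by (rule hcomp[OF Rh(1)])
  have hPt: "hol_at (\<lambda>v. Pt (\<phi> v)) 0" by (rule hcomp[OF Pt(1)])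
  have hQt: "hol_at (\<lambda>v. Qt (\<phi> v)) 0" by (rule hcomp[OF Qt(1)])
  define m where "m v = (fst v * fst (snd v)) ^ c" for v :: c3
  define P' where "P' v = fst v * Qt (\<phi> v)" for v
  define Q' where "Q' v = (fst v * Rh (\<phi> v) - fst v * Qt (\<phi> v) + mu * m v * (mu + fst v * Qt (\<phi> v))) / Ep v" for v
  define R' where "R' v = (lam * snd (snd v) + fst v * Pt (\<phi> v) - snd (snd v) * (mu + fst v * Qt (\<phi> v))) / Ep v" for v
  have mP': "in_m P'" unfolding P'_def in_m_def
    by (auto intro!: hol_at_mult hol_at_x hQt)
  have mQ': "in_m Q'" unfolding Q'_def in_m_def m_def using Ep0 c
    by (auto intro!: hol_at_add hol_at_diff hol_at_mult hol_at_divide hol_at_power hol_at_const hol_at_x hol_at_y hol_at_z hEp hRh hQt)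
  have mR': "in_m R'" unfolding R'_def in_m_def using Ep0
    by (auto intro!: hol_at_add hol_at_diff hol_at_mult hol_at_divide hol_at_const hol_at_x hol_at_y hol_at_z hEp hQt hPt)
  have Epne: "\<forall>\<^sub>F v in nhds 0. Ep v \<noteq> 0" using eventually_ne0[OF hEp] Ep0 by simp
  have conj: "\<forall>\<^sub>F v in nhds 0. G0 (\<phi> v) = \<phi> (corner_form c c 0 mu (-mu) P' Q' R' v)"
    using Epne
  proof eventually_elim
    case (elim v)
    obtain x y z where v: "v = (x,y,z)" by (cases v) auto
    have Epv: "Ep v = 1 + m v * (mu + x * Qt (\<phi> v))"
      by (simp add: Ep_def E_def v \<phi>_def m_def)
    have Ephi: "E (z, x, y) = Ep (x,y,z)" by (simp add: Ep_def \<phi>_def)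
    have mv: "m v = x ^ c * y ^ c" by (simp add: m_def v power_mult_distrib)
    have l1: "fst (snd (G0 (\<phi> v))) = x * Ep v"
      by (simp add: G0_def \<phi>_def v Ephi)
    have r1: "fst (snd (\<phi> (corner_form c c 0 mu (-mu) P' Q' R' v))) = x + m v * (x * (mu + x * Qt (\<phi> v)))"
      by (simp add: \<phi>_def corner_form_def v mv[symmetric] Let_def P'_def)
    have e1: "fst (snd (G0 (\<phi> v))) = fst (snd (\<phi> (corner_form c c 0 mu (-mu) P' Q' R' v)))"
      unfolding l1 r1 Epv by (simp add: algebra_simps)
    have l2: "snd (snd (G0 (\<phi> v))) = y * (1 + m v * (x * Rh (\<phi> v))) / Ep v"
      by (simp add: G0_def \<phi>_def v Ephi m_def mult.assoc)
    have r2: "snd (snd (\<phi> (corner_form c c 0 mu (-mu) P' Q' R' v))) = y + m v * (y * (-mu + Q' v))"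
      by (simp add: \<phi>_def corner_form_def v mv[symmetric] Let_def)
    have e2: "snd (snd (G0 (\<phi> v))) = snd (snd (\<phi> (corner_form c c 0 mu (-mu) P' Q' R' v)))"
      unfolding l2 r2 Q'_def using alg_corner[OF elim Epv, of y "x * Rh (\<phi> v)"] by (simp add: v)
    have l3: "fst (G0 (\<phi> v)) = (z + m v * (lam * z + x * Pt (\<phi> v))) / Ep v"
      by (simp add: G0_def \<phi>_def v Ephi m_def mult.assoc)
    have r3: "fst (\<phi> (corner_form c c 0 mu (-mu) P' Q' R' v)) = z + m v * R' v"
      by (simp add: \<phi>_def corner_form_def v mv[symmetric] Let_def)
    have e3: "fst (G0 (\<phi> v)) = fst (\<phi> (corner_form c c 0 mu (-mu) P' Q' R' v))"
      unfolding l3 r3 R'_def using alg_corner2[OF elim Epv, of z lam "x * Pt (\<phi> v)"] by (simp add: v)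
    show ?case using e1 e2 e3 by (simp add: prod_eq_iff)
  qed
  have gic: "germ_in_coords G0 0 (corner_form c c 0 mu (-mu) P' Q' R')"
    unfolding germ_in_coords_def using lc conj by blast
  have "simple_corner G 0" if "is_lift chart2 f G" for G
    unfolding simple_corner_def
    using c mu0 neg_not_pos_rat[OF mu0] mP' mQ' mR' germ_transfer[OF gic uniq[OF that]]
    by (intro exI[of _ c] exI[of _ 0] exI[of _ mu] exI[of _ "-mu"] exI[of _ P'] exI[of _ Q'] exI[of _ R']) simp
  then show ?thesis using isl by blast
qed


theorem proposition3p19:
  fixes f :: "c3 \<Rightarrow> c3" and c :: nat and lam mu :: complex and P Q R :: "c3 \<Rightarrow> complex"
  assumes "c \<ge> 1" and "lam \<noteq> 0" and "\<exists>t::real. t < 0 \<and> mu = complex_of_real t * lam"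
    and "in_m2 P" and "in_m2 Q" and "in_m R"
    and "\<forall>\<^sub>F v in nhds 0. f v = spike_form c lam mu P Q R v"
  shows "(\<exists>G. is_lift chart3 f G) \<and> (\<forall>G. is_lift chart3 f G \<longrightarrow> degenerate_spike G 0)
     \<and> (\<exists>G. is_lift chart1 f G) \<and> (\<forall>G. is_lift chart1 f G \<longrightarrow> simple_corner G 0)
     \<and> (\<exists>G. is_lift chart2 f G) \<and> (\<forall>G. is_lift chart2 f G \<longrightarrow> simple_corner G 0)"
proof -
  have mu0: "mu \<noteq> 0" using assms(2,3) by auto
  show ?thesis
    using chart3_part[OF assms] chart1_part[OF assms(1,2,4,5,6,7)] chart2_part[OF assms(1) mu0 assms(4-7)]
    by blast
qed

end
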